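(* Consider Problem (P) under Assumption (A) over a sequence of directed graphs satisfying Assumption (B'), and run SONATA for time-varying digraphs with weight matrices satisfying (E) and surrogates satisfying (C), where $\tilde\mu_{\min}\ge D^\ell_{\min}$. Then there exists $\bar\alpha\in(0,1]$ such that for every step-size $\alpha\in(0,\bar\alpha)$ and every $i\in\{1,\dots,m\}$, $\{U(x_i^\nu)\}$ converges to $U^\star$ at an R-linear rate, i.e. $|U(x_i^\nu)-U^\star|=O(z^\nu)$ for some $z\in(0,1)$.
   Context: Problem (P): minimize $U(x)=F(x)+G(x)$ over $x\in\mathcal K$, $F=\frac1m\sum_{i=1}^mf_i$. (A): $\mathcal K\subseteq\mathbb R^d$ nonempty closed convex; each $f_i$ twice differentiable and convex on an open $\mathcal O\supseteq\mathcal K$; $\mu I\preceq\nabla^2F\preceq LI$ on $\mathcal K$ ($\mu>0$, $L<\infty$); $G:\mathcal K\to\mathbb R$ convex; $U^\star$ optimal value. (B'): time-varying digraphs $\mathcal G^\nu=(\{1,\dots,m\},\mathcal E^\nu)$, $(i,j)\in\mathcal E^\nu$ meaning a link from $i$ to $j$; there is an integer $B>0$ such that the graph with edge set $\bigcup_{t=\nu B}^{(\nu+1)B-1}\mathcal E^t$ is strongly connected for all $\nu\ge0$. (E): there is $c_\ell>0$ such that for all $\nu$: $c^\nu_{ii}\ge c_\ell$; $c^\nu_{ij}\ge c_\ell$ if $(j,i)\in\mathcal E^\nu$ and $c^\nu_{ij}=0$ otherwise; $\mathbf1^\top C^\nu=\mathbf1^\top$. (C): $\tilde f_i:\mathcal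 O\times\mathcal O\to\mathbb R$ is $C^2$, $\nabla\tilde f_i(x;x)=\nabla f_i(x)$, $\nabla\tilde f_i(\cdot;x)$ $\tilde L_i$-Lipschitz and $\tilde f_i(\cdot;x)$ $\tilde\mu_i$-strongly convex on $\mathcal K$ for all $x\in\mathcal K$ (derivatives in first argument). Constants $D_i^\ell\le D_i^u$ with $D_i^\ell I\preceq\nabla^2\tilde f_i(x;y)-\nabla^2F(x)\preceq D_i^uI$ on $\mathcal K\times\mathcal K$; $\tilde\mu_{\min}=\min_i\tilde\mu_i$, $D^\ell_{\min}=\min_iD_i^\ell$. SONATA for time-varying digraphs (step-size $\alpha\in(0,1]$): $x_i^0\in\mathcal K$, $y_i^0=\nabla f_i(x_i^0)$, $\phi_i^0=1$; $\hat x_i^\nu=\arg\min_{x_i\in\mathcal K}\tilde f_i(x_i;x_i^\nu)+(y_i^\nu-\nabla f_i(x_i^\nu))^\top(x_i-x_i^\nu)+G(x_i)$; $x_i^{\nu+1/2}=x_i^\nu+\alpha(\hat x_i^\nu-x_i^\nu)$; $\phi_i^{\nu+1}=\sum_jc^\nu_{ij}\phi_j^\nu$; $x_i^{\nu+1}=\frac1{\phi_i^{\nu+1}}\sum_jc^\nu_{ij}\phi_j^\nu x_j^{\nu+1/2}$; $y_i^{\nu+1}=\frac1{\phi_i^{\nu+1}}\sum_jc^\nu_{ij}\big(\phi_j^\nu y_j^\nu+\nabla f_j(x_j^{\nu+1})-\nabla f_j(x_j^\nu)\big)$. *)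

theory Defs
  imports "HOL-Analysis.Analysis"
begin

definition strongly_convex_on :: "real \<Rightarrow> 'a::real_inner set \<Rightarrow> ('a \<Rightarrow> real) \<Rightarrow> bool" where
  "strongly_convex_on mu S f \<longleftrightarrow> convex_on S (\<lambda>x. f x - mu / 2 * (norm x)\<^sup>2)"

definition C2_on :: "'a::euclidean_space set \<Rightarrow> ('a \<Rightarrow> real) \<Rightarrow> bool" where
  "C2_on S f \<longleftrightarrow> (\<exists>D1 :: 'a \<Rightarrow> ('a \<Rightarrow>\<^sub>L real). \<exists>D2 :: 'a \<Rightarrow> ('a \<Rightarrow>\<^sub>L ('a \<Rightarrow>\<^sub>L real)).
      (\<forall>x\<in>S. (f has_derivative blinfun_apply (D1 x)) (at x)) \<and>
      (\<forall>x\<in>S. (D1 has_derivative blinfun_apply (D2 x)) (at x)) \<and>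
      continuous_on S D2)"

text \<open>A digraph on vertex set V with edge set E (pairs (i,j) = link i to j) is strongly connected.\<close>
definition strongly_connected_digraph :: "'v set \<Rightarrow> ('v \<times> 'v) set \<Rightarrow> bool" where
  "strongly_connected_digraph V E \<longleftrightarrow> (\<forall>i\<in>V. \<forall>j\<in>V. (i, j) \<in> (E \<inter> (V \<times> V))\<^sup>*)"

definition R_linear_conv :: "(nat \<Rightarrow> real) \<Rightarrow> real \<Rightarrow> bool" where
  "R_linear_conv u l \<longleftrightarrow> (\<exists>z. 0 < z \<and> z < 1 \<and> (\<exists>K. \<forall>\<nu>. \<bar>u \<nu> - l\<bar> \<le> K * z ^ \<nu>))"

end

theory Submission
  imports Defs
begin


lemma line_deriv:
  fixes f :: "'a::real_inner \<Rightarrow> real"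
  assumes "(f has_derivative (\<lambda>v. gr \<bullet> v)) (at (p + t *\<^sub>R h))"
  shows "((\<lambda>s. f (p + s *\<^sub>R h)) has_real_derivative (gr \<bullet> h)) (at t)"
proof -
  have l: "((\<lambda>s. p + s *\<^sub>R h) has_derivative (\<lambda>s. s *\<^sub>R h)) (at t)"
    by (auto intro!: derivative_eq_intros)
  have "((\<lambda>s. f (p + s *\<^sub>R h)) has_derivative (\<lambda>s. gr \<bullet> (s *\<^sub>R h))) (at t)"
    using has_derivative_compose[OF l assms] by simp
  moreover have "(\<lambda>s. gr \<bullet> (s *\<^sub>R h)) = (*) (gr \<bullet> h)" by (auto simp: mult.commute)
  ultimately show ?thesis by (simp add: has_field_derivative_def)
qed

lemma line_deriv_vec:
  fixes g :: "'a::real_inner \<Rightarrow> 'a"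
  assumes "(g has_derivative H) (at (p + t *\<^sub>R h))"
  shows "((\<lambda>s. g (p + s *\<^sub>R h) \<bullet> k) has_real_derivative (H h \<bullet> k)) (at t)"
proof -
  have l: "((\<lambda>s. p + s *\<^sub>R h) has_derivative (\<lambda>s. s *\<^sub>R h)) (at t)"
    by (auto intro!: derivative_eq_intros)
  have c: "((\<lambda>s. g (p + s *\<^sub>R h)) has_derivative (\<lambda>s. H (s *\<^sub>R h))) (at t)"
    using has_derivative_compose[OF l assms] by simp
  have lin: "linear H" using assms has_derivative_linear by blast
  have "((\<lambda>s. g (p + s *\<^sub>R h) \<bullet> k) has_derivative (\<lambda>s. H (s *\<^sub>R h) \<bullet> k)) (at t)"
    using has_derivative_inner_left[OF c] by simp
  moreover have "(\<lambda>s. H (s *\<^sub>R h) \<bullet> k) = (*) (H h \<bullet> k)"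
    using lin by (auto simp: linear_scale mult.commute)
  ultimately show ?thesis by (simp add: has_field_derivative_def)
qed




lemma quad_upper:
  fixes \<phi> :: "'a::real_inner \<Rightarrow> real"
  assumes K: "convex K"
    and d1: "\<And>x. x \<in> K \<Longrightarrow> (\<phi> has_derivative (\<lambda>v. g x \<bullet> v)) (at x)"
    and d2: "\<And>x. x \<in> K \<Longrightarrow> (g has_derivative H x) (at x)"
    and hb: "\<And>x h. x \<in> K \<Longrightarrow> H x h \<bullet> h \<le> M * (norm h)\<^sup>2"
    and a: "a \<in> K" and b: "b \<in> K"
  shows "\<phi> b \<le> \<phi> a + g a \<bullet> (b - a) + M / 2 * (norm (b - a))\<^sup>2"
proof -
  define d where "d = b - a"
  have inK: "a + s *\<^sub>R d \<in> K" if "0 \<le> s" "s \<le> 1" for s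
  proof -
    have "a + s *\<^sub>R d = (1 - s) *\<^sub>R a + s *\<^sub>R b" by (simp add: d_def algebra_simps)
    thus ?thesis using K a b that by (simp add: convex_def)
  qed
  define r where "r = (\<lambda>s. g (a + s *\<^sub>R d) \<bullet> d - g a \<bullet> d - M * s * (norm d)\<^sup>2)"
  have r_der: "(r has_real_derivative (H (a + s *\<^sub>R d) d \<bullet> d - M * (norm d)\<^sup>2)) (at s)"
    if "0 \<le> s" "s \<le> 1" for s
  proof -
    have "((\<lambda>s. g (a + s *\<^sub>R d) \<bullet> d) has_real_derivative (H (a + s *\<^sub>R d) d \<bullet> d)) (at s)"
      by (rule line_deriv_vec) (use d2 inK that in auto)
    then show ?thesis unfolding r_def
      by (auto intro!: derivative_eq_intros)
  qed
  have r_le: "r s \<le> 0" if "0 \<le> s" "s \<le> 1" for s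
  proof -
    have "r s \<le> r 0"
      apply (rule DERIV_nonpos_imp_nonincreasing[of 0 s r])
      using that r_der hb inK by (force)+
    also have "r 0 = 0" by (simp add: r_def)
    finally show ?thesis .
  qed
  define w where "w = (\<lambda>s. \<phi> (a + s *\<^sub>R d) - \<phi> a - (g a \<bullet> d) * s - M / 2 * s\<^sup>2 * (norm d)\<^sup>2)"
  have w_der: "(w has_real_derivative r s) (at s)" if "0 \<le> s" "s \<le> 1" for s
  proof -
    have "((\<lambda>s. \<phi> (a + s *\<^sub>R d)) has_real_derivative (g (a + s *\<^sub>R d) \<bullet> d)) (at s)"
      by (rule line_deriv) (use d1 inK that in auto)
    then have "(w has_real_derivative (g (a + s *\<^sub>R d) \<bullet> d - g a \<bullet> d - M / 2 * (2 * s) * (norm d)\<^sup>2)) (at s)"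
      unfolding w_def by (auto intro!: derivative_eq_intros)
    then show ?thesis by (simp add: r_def)
  qed
  have "w 1 \<le> w 0"
    apply (rule DERIV_nonpos_imp_nonincreasing[of 0 1 w])
    using w_der r_le by force+
  then show ?thesis by (simp add: w_def d_def inner_commute)
qed

lemma quad_lower:
  fixes \<phi> :: "'a::real_inner \<Rightarrow> real"
  assumes K: "convex K"
    and d1: "\<And>x. x \<in> K \<Longrightarrow> (\<phi> has_derivative (\<lambda>v. g x \<bullet> v)) (at x)"
    and d2: "\<And>x. x \<in> K \<Longrightarrow> (g has_derivative H x) (at x)"
    and hb: "\<And>x h. x \<in> K \<Longrightarrow> M * (norm h)\<^sup>2 \<le> H x h \<bullet> h"
    and a: "a \<in> K" and b: "b \<in> K"
  shows "\<phi> a + g a \<bullet> (b - a) + M / 2 * (norm (b - a))\<^sup>2 \<le> \<phi> b"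
proof -
  have "(- \<phi>) b \<le> (- \<phi>) a + (- g a) \<bullet> (b - a) + (- M) / 2 * (norm (b - a))\<^sup>2"
  proof (rule quad_upper[where g = "\<lambda>x. - g x" and H = "\<lambda>x h. - H x h" and K = K])
    fix x assume x: "x \<in> K"
    show "((- \<phi>) has_derivative (\<lambda>v. - g x \<bullet> v)) (at x)"
      using has_derivative_minus[OF d1[OF x]] by (simp add: fun_Compl_def)
    show "((\<lambda>x. - g x) has_derivative (\<lambda>h. - H x h)) (at x)"
      using has_derivative_minus[OF d2[OF x]] by simp
    fix h show "- H x h \<bullet> h \<le> - M * (norm h)\<^sup>2" using hb[OF x, of h] by simp
  qed (use K a b in auto)
  then show ?thesis by simp
qed




lemma convex_tangent:
  fixes q :: "'a::real_inner \<Rightarrow> real"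
  assumes cv: "convex_on S q"
    and d: "\<And>x. x \<in> S \<Longrightarrow> (q has_derivative (\<lambda>v. gq x \<bullet> v)) (at x)"
    and a: "a \<in> S" and b: "b \<in> S"
  shows "q a + gq a \<bullet> (b - a) \<le> q b"
proof (rule ccontr)
  assume "\<not> ?thesis"
  then have lt: "q b - q a < gq a \<bullet> (b - a)" by simp
  define c where "c = q b - q a"
  define p where "p = (\<lambda>s. q (a + s *\<^sub>R (b - a)) - c * s)"
  have "((\<lambda>s. q (a + s *\<^sub>R (b - a))) has_real_derivative (gq a \<bullet> (b - a))) (at 0)"
    by (rule line_deriv) (use d a in simp)
  then have "(p has_real_derivative (gq a \<bullet> (b - a) - c)) (at 0)"
    unfolding p_def by (auto intro!: derivative_eq_intros)
  moreover have "0 < gq a \<bullet> (b - a) - c" using lt c_def by simp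
  ultimately obtain e where e: "e > 0" "\<And>h. h > 0 \<Longrightarrow> h < e \<Longrightarrow> p 0 < p (0 + h)"
    using DERIV_pos_inc_right by blast
  define h where "h = min (e / 2) 1"
  have h: "h > 0" "h < e" "h \<le> 1" using e by (auto simp: h_def)
  have "q (a + h *\<^sub>R (b - a)) = q ((1 - h) *\<^sub>R a + h *\<^sub>R b)" by (simp add: algebra_simps)
  also have "\<dots> \<le> (1 - h) * q a + h * q b" using convex_onD[OF cv, of h a b] h a b by simp
  finally have "q (a + h *\<^sub>R (b - a)) \<le> (1 - h) * q a + h * q b" .
  then have "p h \<le> p 0" unfolding p_def c_def by (simp add: algebra_simps)
  with e(2)[OF h(1) h(2)] show False by simp
qed

lemma hess_key:
  fixes f :: "'a::real_inner \<Rightarrow> real"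
  assumes ball: "\<And>y. norm (y - x) < r \<Longrightarrow> y \<in> Op"
    and d1: "\<And>y. y \<in> Op \<Longrightarrow> (f has_derivative (\<lambda>v. g y \<bullet> v)) (at y)"
    and lin: "linear H"
    and R: "\<And>y. norm (y - x) < \<delta> \<Longrightarrow> norm (g y - g x - H (y - x)) \<le> \<epsilon> * norm (y - x)"
    and epos: "\<epsilon> > 0"
    and s: "0 < s" "s * (norm h + norm k) < r" "s * (norm h + norm k) < \<delta>"
  shows "\<bar>f (x + s *\<^sub>R k + s *\<^sub>R h) - f (x + s *\<^sub>R h) - f (x + s *\<^sub>R k) + f x - s\<^sup>2 * (H k \<bullet> h)\<bar>
           \<le> \<epsilon> * s\<^sup>2 * ((2 * norm h + norm k) * norm h)"
proof -
  have nk: "norm (t *\<^sub>R h) \<le> s * (norm h + norm k)" "norm (s *\<^sub>R k + t *\<^sub>R h) \<le> s * (norm h + norm k)"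
    if "0 \<le> t" "t \<le> s" for t
  proof -
    have th: "t * norm h \<le> s * norm h" using that by (intro mult_right_mono) auto
    have sk: "0 \<le> s * norm k" using s(1) by simp
    show "norm (t *\<^sub>R h) \<le> s * (norm h + norm k)"
      using th sk that(1) by (simp add: distrib_left del: zero_le_mult_iff)
    have "norm (s *\<^sub>R k + t *\<^sub>R h) \<le> norm (s *\<^sub>R k) + norm (t *\<^sub>R h)" by (rule norm_triangle_ineq)
    also have "\<dots> \<le> s * (norm h + norm k)"
      using th sk that(1) by (simp add: distrib_left del: zero_le_mult_iff)
    finally show "norm (s *\<^sub>R k + t *\<^sub>R h) \<le> s * (norm h + norm k)" .
  qed
  define \<phi> where "\<phi> = (\<lambda>t. f ((x + s *\<^sub>R k) + t *\<^sub>R h) - f (x + t *\<^sub>R h))"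
  define \<phi>' where "\<phi>' = (\<lambda>t. g (x + s *\<^sub>R k + t *\<^sub>R h) \<bullet> h - g (x + t *\<^sub>R h) \<bullet> h)"
  have der: "(\<phi> has_real_derivative \<phi>' t) (at t)" if "0 \<le> t" "t \<le> s" for t
  proof -
    have i1: "x + s *\<^sub>R k + t *\<^sub>R h \<in> Op" using nk(2)[OF that] s ball[of "x + s *\<^sub>R k + t *\<^sub>R h"]
      by (simp add: add.assoc)
    have i2: "x + t *\<^sub>R h \<in> Op" using nk(1)[OF that] s ball[of "x + t *\<^sub>R h"] by simp
    have "((\<lambda>t. f ((x + s *\<^sub>R k) + t *\<^sub>R h)) has_real_derivative g (x + s *\<^sub>R k + t *\<^sub>R h) \<bullet> h) (at t)"
      by (rule line_deriv) (use d1 i1 in simp)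
    moreover have "((\<lambda>t. f (x + t *\<^sub>R h)) has_real_derivative g (x + t *\<^sub>R h) \<bullet> h) (at t)"
      by (rule line_deriv) (use d1 i2 in simp)
    ultimately show ?thesis unfolding \<phi>_def \<phi>'_def by (rule DERIV_diff)
  qed
  obtain \<tau> where \<tau>: "0 < \<tau>" "\<tau> < s" "\<phi> s - \<phi> 0 = (s - 0) * \<phi>' \<tau>"
    using MVT2[of 0 s \<phi> \<phi>'] der s(1) by auto
  define R where "R = (\<lambda>y. g y - g x - H (y - x))"
  have Rb: "norm (R y) \<le> \<epsilon> * norm (y - x)" if "norm (y - x) < \<delta>" for y
    using R that by (simp add: R_def)
  have e1: "g (x + s *\<^sub>R k + \<tau> *\<^sub>R h) = g x + H (s *\<^sub>R k + \<tau> *\<^sub>R h) + R (x + s *\<^sub>R k + \<tau> *\<^sub>R h)"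
    by (simp add: R_def add.assoc)
  have e2: "g (x + \<tau> *\<^sub>R h) = g x + H (\<tau> *\<^sub>R h) + R (x + \<tau> *\<^sub>R h)"
    by (simp add: R_def)
  have "\<phi>' \<tau> = s * (H k \<bullet> h) + (R (x + s *\<^sub>R k + \<tau> *\<^sub>R h) - R (x + \<tau> *\<^sub>R h)) \<bullet> h"
  proof -
    have hl: "H (s *\<^sub>R k + \<tau> *\<^sub>R h) = s *\<^sub>R H k + \<tau> *\<^sub>R H h" "H (\<tau> *\<^sub>R h) = \<tau> *\<^sub>R H h"
      using lin by (simp_all add: linear_add linear_scale)
    show ?thesis unfolding \<phi>'_def e1 e2 hl
      by (simp add: inner_diff_left inner_add_left)
  qed
  then have "\<bar>\<phi>' \<tau> - s * (H k \<bullet> h)\<bar> = \<bar>(R (x + s *\<^sub>R k + \<tau> *\<^sub>R h) - R (x + \<tau> *\<^sub>R h)) \<bullet> h\<bar>" by simp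
  also have "\<dots> \<le> norm (R (x + s *\<^sub>R k + \<tau> *\<^sub>R h) - R (x + \<tau> *\<^sub>R h)) * norm h"
    by (rule Cauchy_Schwarz_ineq2)
  also have "\<dots> \<le> (norm (R (x + s *\<^sub>R k + \<tau> *\<^sub>R h)) + norm (R (x + \<tau> *\<^sub>R h))) * norm h"
    by (intro mult_right_mono norm_triangle_ineq4) simp
  also have "\<dots> \<le> (\<epsilon> * norm (s *\<^sub>R k + \<tau> *\<^sub>R h) + \<epsilon> * norm (\<tau> *\<^sub>R h)) * norm h"
  proof -
    have "norm (R (x + s *\<^sub>R k + \<tau> *\<^sub>R h)) \<le> \<epsilon> * norm (s *\<^sub>R k + \<tau> *\<^sub>R h)"
      using Rb[of "x + s *\<^sub>R k + \<tau> *\<^sub>R h"] nk(2)[of \<tau>] \<tau> s by (simp add: add.assoc)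
    moreover have "norm (R (x + \<tau> *\<^sub>R h)) \<le> \<epsilon> * norm (\<tau> *\<^sub>R h)"
      using Rb[of "x + \<tau> *\<^sub>R h"] nk(1)[of \<tau>] \<tau> s by simp
    ultimately show ?thesis by (intro mult_right_mono) auto
  qed
  also have "\<dots> \<le> (\<epsilon> * (s * norm k + s * norm h) + \<epsilon> * (s * norm h)) * norm h"
  proof -
    have eps: "\<epsilon> \<ge> 0" using epos by simp
    have "norm (s *\<^sub>R k + \<tau> *\<^sub>R h) \<le> s * norm k + s * norm h"
    proof -
      have "norm (s *\<^sub>R k + \<tau> *\<^sub>R h) \<le> norm (s *\<^sub>R k) + norm (\<tau> *\<^sub>R h)" by (rule norm_triangle_ineq)
      moreover have "\<tau> * norm h \<le> s * norm h" using \<tau> by (intro mult_right_mono) auto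
      ultimately show ?thesis using \<tau> s(1) by simp
    qed
    moreover have "norm (\<tau> *\<^sub>R h) \<le> s * norm h" using \<tau> by (simp add: mult_right_mono)
    ultimately show ?thesis using eps by (intro mult_right_mono add_mono mult_left_mono) auto
  qed
  finally have b1: "\<bar>\<phi>' \<tau> - s * (H k \<bullet> h)\<bar> \<le> \<epsilon> * s * ((2 * norm h + norm k) * norm h)"
    by (simp add: algebra_simps)
  have "\<phi> s - \<phi> 0 - s\<^sup>2 * (H k \<bullet> h) = s * (\<phi>' \<tau> - s * (H k \<bullet> h))"
    using \<tau>(3) by (simp add: power2_eq_square algebra_simps)
  then have "\<bar>\<phi> s - \<phi> 0 - s\<^sup>2 * (H k \<bullet> h)\<bar> \<le> s * (\<epsilon> * s * ((2 * norm h + norm k) * norm h))"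
    using b1 s(1) by (simp add: abs_mult mult_left_mono)
  then show ?thesis by (simp add: \<phi>_def power2_eq_square algebra_simps)
qed




lemma hessian_symmetric:
  fixes f :: "'a::real_inner \<Rightarrow> real"
  assumes Op: "open Op" "x \<in> Op"
    and d1: "\<And>y. y \<in> Op \<Longrightarrow> (f has_derivative (\<lambda>v. g y \<bullet> v)) (at y)"
    and d2: "(g has_derivative H) (at x)"
  shows "H k \<bullet> h = H h \<bullet> k"
proof (rule ccontr)
  assume ne: "H k \<bullet> h \<noteq> H h \<bullet> k"
  define D where "D = \<bar>H k \<bullet> h - H h \<bullet> k\<bar>"
  have Dpos: "D > 0" using ne by (simp add: D_def)
  define C where "C = (2 * norm h + norm k) * norm h + (2 * norm k + norm h) * norm k + 1"
  have Cpos: "C > 0" unfolding C_def by (intro add_nonneg_pos) auto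
  define \<epsilon> where "\<epsilon> = D / (2 * C)"
  have epos: "\<epsilon> > 0" using Dpos Cpos by (simp add: \<epsilon>_def)
  have lin: "linear H" using d2 has_derivative_linear by blast
  obtain r where r: "r > 0" "ball x r \<subseteq> Op" using Op openE by blast
  have rb: "\<And>y. norm (y - x) < r \<Longrightarrow> y \<in> Op" using r by (auto simp: dist_norm norm_minus_commute)
  obtain \<delta> where \<delta>: "\<delta> > 0" "\<And>y. norm (y - x) < \<delta> \<Longrightarrow> norm (g y - g x - H (y - x)) \<le> \<epsilon> * norm (y - x)"
    using d2 epos unfolding has_derivative_at_alt by blast
  define s where "s = min r \<delta> / (2 * (norm h + norm k + 1))"
  have s0: "s > 0" using r \<delta> unfolding s_def
    by (intro divide_pos_pos) (simp, smt (verit) norm_ge_zero)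
  have "s * (norm h + norm k) < min r \<delta>"
  proof -
    have "s * (norm h + norm k) \<le> s * (norm h + norm k + 1)" using s0 by simp
    also have "\<dots> = min r \<delta> / 2"
    proof -
      have p: "norm h + norm k + 1 \<noteq> 0" by (smt (verit) norm_ge_zero)
      show ?thesis unfolding s_def using p by (simp add: field_simps)
    qed
    also have "\<dots> < min r \<delta>" using r \<delta> by (simp add: min_def)
    finally show ?thesis .
  qed
  then have s1: "s * (norm h + norm k) < r" "s * (norm h + norm k) < \<delta>" by auto
  have s2: "s * (norm k + norm h) < r" "s * (norm k + norm h) < \<delta>" using s1 by (simp_all add: add.commute)
  note k1 = hess_key[OF rb d1 lin \<delta>(2) epos s0 s1]
  note k2 = hess_key[OF rb d1 lin \<delta>(2) epos s0 s2]
  have eqx: "x + s *\<^sub>R h + s *\<^sub>R k = x + s *\<^sub>R k + s *\<^sub>R h" by (simp add: algebra_simps)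
  define P where "P = f (x + s *\<^sub>R k + s *\<^sub>R h) - f (x + s *\<^sub>R h) - f (x + s *\<^sub>R k) + f x"
  have a1: "\<bar>P - s\<^sup>2 * (H k \<bullet> h)\<bar> \<le> \<epsilon> * s\<^sup>2 * ((2 * norm h + norm k) * norm h)"
    using k1 unfolding P_def .
  have a2: "\<bar>P - s\<^sup>2 * (H h \<bullet> k)\<bar> \<le> \<epsilon> * s\<^sup>2 * ((2 * norm k + norm h) * norm k)"
    using k2 unfolding P_def eqx by simp
  have "s\<^sup>2 * D = \<bar>(P - s\<^sup>2 * (H h \<bullet> k)) - (P - s\<^sup>2 * (H k \<bullet> h))\<bar>"
  proof -
    have "(P - s\<^sup>2 * (H h \<bullet> k)) - (P - s\<^sup>2 * (H k \<bullet> h)) = s\<^sup>2 * (H k \<bullet> h - H h \<bullet> k)"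
      by (simp add: algebra_simps)
    then show ?thesis unfolding D_def by (simp add: abs_mult)
  qed
  also have "\<dots> \<le> \<bar>P - s\<^sup>2 * (H h \<bullet> k)\<bar> + \<bar>P - s\<^sup>2 * (H k \<bullet> h)\<bar>" by (rule abs_triangle_ineq4)
  also have "\<dots> \<le> \<epsilon> * s\<^sup>2 * (C - 1)" using a1 a2 unfolding C_def by (simp add: algebra_simps)
  also have "\<dots> < \<epsilon> * s\<^sup>2 * C" using epos s0 by simp
  also have "\<dots> = s\<^sup>2 * (D / 2)" unfolding \<epsilon>_def using Cpos by (simp add: field_simps)
  finally have "D < D / 2" using s0 by simp
  then show False using Dpos by simp
qed



lemma grad_monotone:
  fixes f :: "'a::real_inner \<Rightarrow> real"
  assumes cv: "convex_on S f"
    and d1: "\<And>y. y \<in> S \<Longrightarrow> (f has_derivative (\<lambda>v. g y \<bullet> v)) (at y)"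
    and y: "y \<in> S" and z: "z \<in> S"
  shows "(g y - g z) \<bullet> (y - z) \<ge> 0"
proof -
  have "f z + g z \<bullet> (y - z) \<le> f y" by (rule convex_tangent[OF cv d1 z y])
  moreover have "f y + g y \<bullet> (z - y) \<le> f z" by (rule convex_tangent[OF cv d1 y z])
  ultimately have "g z \<bullet> (y - z) + g y \<bullet> (z - y) \<le> 0" by simp
  moreover have "g y \<bullet> (z - y) = - (g y \<bullet> (y - z))" by (simp add: inner_diff_right)
  ultimately show ?thesis by (simp add: inner_diff_left)
qed

lemma hessian_psd:
  fixes f :: "'a::real_inner \<Rightarrow> real"
  assumes Op: "open Op" "x \<in> Op"
    and cv: "convex_on Op f"
    and d1: "\<And>y. y \<in> Op \<Longrightarrow> (f has_derivative (\<lambda>v. g y \<bullet> v)) (at y)"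
    and d2: "(g has_derivative H) (at x)"
  shows "H h \<bullet> h \<ge> 0"
proof (rule ccontr)
  assume "\<not> ?thesis"
  then have neg: "H h \<bullet> h < 0" by simp
  have "((\<lambda>t. g (x + t *\<^sub>R h) \<bullet> h) has_real_derivative (H h \<bullet> h)) (at 0)"
    by (rule line_deriv_vec) (use d2 in simp)
  then obtain d where d: "d > 0" "\<And>t. t > 0 \<Longrightarrow> t < d \<Longrightarrow> g (x + 0 *\<^sub>R h) \<bullet> h > g (x + (0 + t) *\<^sub>R h) \<bullet> h"
    using DERIV_neg_dec_right[OF _ neg] by blast
  obtain r where r: "r > 0" "ball x r \<subseteq> Op" using Op openE by blast
  define t where "t = min (d / 2) (r / (2 * (norm h + 1)))"
  have hp: "norm h + 1 > 0" by (smt (verit) norm_ge_zero)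
  have t0: "t > 0" using d r hp by (simp add: t_def)
  have td: "t < d" using d by (simp add: t_def)
  have "t * (norm h + 1) \<le> r / (2 * (norm h + 1)) * (norm h + 1)"
    using hp by (intro mult_right_mono) (auto simp: t_def)
  also have "\<dots> = r / 2" using hp by (simp add: field_simps)
  finally have "t * norm h < r" using r t0 by (simp add: algebra_simps)
  then have inO: "x + t *\<^sub>R h \<in> Op" using r t0 by (auto simp: dist_norm)
  have "(g (x + t *\<^sub>R h) - g x) \<bullet> ((x + t *\<^sub>R h) - x) \<ge> 0"
    by (rule grad_monotone[OF cv d1 inO Op(2)])
  then have "t * ((g (x + t *\<^sub>R h) - g x) \<bullet> h) \<ge> 0" by simp
  then have "(g (x + t *\<^sub>R h) - g x) \<bullet> h \<ge> 0" using t0 by (simp add: zero_le_mult_iff)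
  moreover have "g x \<bullet> h > g (x + t *\<^sub>R h) \<bullet> h" using d(2)[OF t0 td] by simp
  ultimately show False by (simp add: inner_diff_left)
qed

lemma sym_psd_norm_bound:
  fixes H :: "'a::real_inner \<Rightarrow> 'a"
  assumes lin: "linear H"
    and sym: "\<And>u v. H u \<bullet> v = H v \<bullet> u"
    and psd: "\<And>u. H u \<bullet> u \<ge> 0"
    and ub: "\<And>u. H u \<bullet> u \<le> M * (norm u)\<^sup>2"
  shows "norm (H u) \<le> M * norm u"
proof (cases "H u = 0")
  case True
  have "M * (norm u)\<^sup>2 \<ge> 0" using psd ub order_trans by blast
  then show ?thesis using True
    by (cases "u = 0") (auto simp: zero_le_mult_iff)
next
  case False
  then have u0: "u \<noteq> 0" using lin linear_0 by force
  define v where "v = H u"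
  have nv: "norm v > 0" using False by (simp add: v_def)
  have nu: "norm u > 0" using u0 by simp
  define s where "s = norm v / norm u"
  have s0: "s > 0" using nv nu by (simp add: s_def)
  have Hl: "H (s *\<^sub>R u + v) = s *\<^sub>R H u + H v" "H (s *\<^sub>R u - v) = s *\<^sub>R H u - H v"
    using lin by (simp_all add: linear_add linear_diff linear_scale)
  have "H (s *\<^sub>R u + v) \<bullet> (s *\<^sub>R u + v) - H (s *\<^sub>R u - v) \<bullet> (s *\<^sub>R u - v)
        = 2 * s * (H u \<bullet> v) + 2 * s * (H v \<bullet> u)"
    unfolding Hl by (simp add: inner_add_left inner_add_right inner_diff_left inner_diff_right algebra_simps)
  also have "\<dots> = 4 * s * (norm v)\<^sup>2" using sym[of v u] by (simp add: v_def power2_norm_eq_inner)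
  finally have eq: "4 * s * (norm v)\<^sup>2 = H (s *\<^sub>R u + v) \<bullet> (s *\<^sub>R u + v) - H (s *\<^sub>R u - v) \<bullet> (s *\<^sub>R u - v)" by simp
  have M0: "M \<ge> 0"
  proof -
    have "0 \<le> M * (norm u)\<^sup>2" using psd[of u] ub[of u] by linarith
    then show ?thesis using nu by (simp add: zero_le_mult_iff)
  qed
  have "(norm (s *\<^sub>R u + v))\<^sup>2 \<le> (s * norm u + norm v)\<^sup>2"
    using norm_triangle_ineq[of "s *\<^sub>R u" v] s0 by (intro power_mono) auto
  also have "s * norm u = norm v" using nu by (simp add: s_def)
  finally have n2: "(norm (s *\<^sub>R u + v))\<^sup>2 \<le> 4 * (norm v)\<^sup>2" by (simp add: power2_eq_square)
  have "4 * s * (norm v)\<^sup>2 \<le> M * (norm (s *\<^sub>R u + v))\<^sup>2"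
    using eq ub[of "s *\<^sub>R u + v"] psd[of "s *\<^sub>R u - v"] by linarith
  also have "\<dots> \<le> M * (4 * (norm v)\<^sup>2)" using n2 M0 by (rule mult_left_mono)
  finally have "s * (4 * (norm v)\<^sup>2) \<le> M * (4 * (norm v)\<^sup>2)" by simp
  then have "s \<le> M" using nv by (simp add: mult_le_cancel_right)
  then have "norm v / norm u \<le> M" by (simp add: s_def)
  then show ?thesis using nu by (simp add: v_def pos_divide_le_eq)
qed




definition diam :: "nat \<Rightarrow> (nat \<Rightarrow> 'a::real_normed_vector) \<Rightarrow> real" where
  "diam m v = Max ((\<lambda>(i, k). norm (v i - v k)) ` ({..<m} \<times> {..<m}))"

lemma diam_ge: "i < m \<Longrightarrow> k < m \<Longrightarrow> norm (v i - v k) \<le> diam m v"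
  unfolding diam_def by (rule Max_ge) auto

lemma diam_le: "m \<ge> 1 \<Longrightarrow> (\<And>i k. i < m \<Longrightarrow> k < m \<Longrightarrow> norm (v i - v k) \<le> c) \<Longrightarrow> diam m v \<le> c"
  unfolding diam_def by (subst Max_le_iff) (auto simp: lessThan_empty_iff)

lemma diam_nonneg: "m \<ge> 1 \<Longrightarrow> 0 \<le> diam m v"
  using diam_ge[of 0 m 0 v] by simp

lemma comb_diff:
  fixes v :: "nat \<Rightarrow> 'a::real_normed_vector"
  assumes A: "\<And>j. j < m \<Longrightarrow> A j \<ge> 0" and B: "\<And>j. j < m \<Longrightarrow> B j \<ge> 0"
    and sA: "(\<Sum>j<m. A j) = lam" and sB: "(\<Sum>j<m. B j) = lam"
  shows "norm ((\<Sum>j<m. A j *\<^sub>R v j) - (\<Sum>j<m. B j *\<^sub>R v j)) \<le> lam * diam m v"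
proof (cases "lam = 0")
  case True
  then have "\<forall>j\<in>{..<m}. A j = 0" "\<forall>j\<in>{..<m}. B j = 0"
    using sum_nonneg_eq_0_iff[of "{..<m}" A] sum_nonneg_eq_0_iff[of "{..<m}" B] A B sA sB by auto
  then show ?thesis using True by simp
next
  case False
  have l0: "lam \<ge> 0" using sA A by (metis lessThan_iff sum_nonneg)
  then have lp: "lam > 0" using False by simp
  have eq: "lam *\<^sub>R ((\<Sum>j<m. A j *\<^sub>R v j) - (\<Sum>j<m. B j *\<^sub>R v j))
      = (\<Sum>j<m. \<Sum>l<m. (A j * B l) *\<^sub>R (v j - v l))"
  proof -
    have "(\<Sum>j<m. \<Sum>l<m. (A j * B l) *\<^sub>R (v j - v l))
        = (\<Sum>j<m. \<Sum>l<m. (A j * B l) *\<^sub>R v j) - (\<Sum>j<m. \<Sum>l<m. (A j * B l) *\<^sub>R v l)"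
      by (simp add: scaleR_diff_right sum_subtractf)
    also have "(\<Sum>j<m. \<Sum>l<m. (A j * B l) *\<^sub>R v j) = lam *\<^sub>R (\<Sum>j<m. A j *\<^sub>R v j)"
      by (simp add: scaleR_sum_right sB[symmetric] scaleR_sum_left[symmetric] sum_distrib_left[symmetric] mult.commute)
    also have "(\<Sum>j<m. \<Sum>l<m. (A j * B l) *\<^sub>R v l) = lam *\<^sub>R (\<Sum>l<m. B l *\<^sub>R v l)"
      apply (subst sum.swap)
      by (simp add: scaleR_sum_right sA[symmetric] scaleR_sum_left[symmetric] sum_distrib_right[symmetric])
    finally show ?thesis by (simp add: scaleR_diff_right)
  qed
  have "lam * norm ((\<Sum>j<m. A j *\<^sub>R v j) - (\<Sum>j<m. B j *\<^sub>R v j))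
      = norm (\<Sum>j<m. \<Sum>l<m. (A j * B l) *\<^sub>R (v j - v l))"
    using l0 by (simp flip: eq)
  also have "\<dots> \<le> (\<Sum>j<m. \<Sum>l<m. norm ((A j * B l) *\<^sub>R (v j - v l)))"
    by (rule order_trans[OF norm_sum sum_mono]) (rule norm_sum)
  also have "\<dots> \<le> (\<Sum>j<m. \<Sum>l<m. (A j * B l) * diam m v)"
    using A B by (intro sum_mono) (auto intro!: mult_left_mono diam_ge)
  also have "\<dots> = lam * (lam * diam m v)"
    by (simp add: sum_distrib_right[symmetric] sum_distrib_left[symmetric] sA sB mult.assoc)
  finally show ?thesis using lp by simp
qed

lemma stoch_contract:
  fixes v :: "nat \<Rightarrow> 'a::real_normed_vector"
  assumes P: "\<And>j. j < m \<Longrightarrow> P j \<ge> \<delta>" and Q: "\<And>j. j < m \<Longrightarrow> Q j \<ge> \<delta>"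
    and sP: "(\<Sum>j<m. P j) = 1" and sQ: "(\<Sum>j<m. Q j) = 1"
  shows "norm ((\<Sum>j<m. P j *\<^sub>R v j) - (\<Sum>j<m. Q j *\<^sub>R v j)) \<le> (1 - real m * \<delta>) * diam m v"
proof -
  have "norm ((\<Sum>j<m. (P j - \<delta>) *\<^sub>R v j) - (\<Sum>j<m. (Q j - \<delta>) *\<^sub>R v j)) \<le> (1 - real m * \<delta>) * diam m v"
    by (rule comb_diff) (use P Q sP sQ in \<open>auto simp: sum_subtractf\<close>)
  moreover have "(\<Sum>j<m. (P j - \<delta>) *\<^sub>R v j) - (\<Sum>j<m. (Q j - \<delta>) *\<^sub>R v j)
      = (\<Sum>j<m. P j *\<^sub>R v j) - (\<Sum>j<m. Q j *\<^sub>R v j)"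
    by (simp add: scaleR_diff_left sum_subtractf)
  ultimately show ?thesis by simp
qed




fun Wp :: "(nat \<Rightarrow> nat \<Rightarrow> nat \<Rightarrow> real) \<Rightarrow> nat \<Rightarrow> nat \<Rightarrow> nat \<Rightarrow> nat \<Rightarrow> nat \<Rightarrow> real" where
  "Wp W m s 0 i j = (if i = j then 1 else 0)"
| "Wp W m s (Suc n) i j = (\<Sum>l<m. W (s + n) i l * Wp W m s n l j)"

lemma Wp_nonneg:
  assumes "\<And>k i j. i < m \<Longrightarrow> j < m \<Longrightarrow> W k i j \<ge> 0"
  shows "i < m \<Longrightarrow> j < m \<Longrightarrow> Wp W m s n i j \<ge> 0"
proof (induction n arbitrary: i)
  case (Suc n)
  then show ?case using assms by (auto intro!: sum_nonneg mult_nonneg_nonneg)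
qed simp

lemma Wp_rows:
  assumes "\<And>k i. i < m \<Longrightarrow> (\<Sum>j<m. W k i j) = 1"
  shows "i < m \<Longrightarrow> (\<Sum>j<m. Wp W m s n i j) = 1"
proof (induction n arbitrary: i)
  case 0
  then show ?case by (simp add: sum.delta)
next
  case (Suc n)
  have "(\<Sum>j<m. Wp W m s (Suc n) i j) = (\<Sum>j<m. \<Sum>l<m. W (s + n) i l * Wp W m s n l j)" by simp
  also have "\<dots> = (\<Sum>l<m. \<Sum>j<m. W (s + n) i l * Wp W m s n l j)" by (rule sum.swap)
  also have "\<dots> = (\<Sum>l<m. W (s + n) i l * (\<Sum>j<m. Wp W m s n l j))" by (simp add: sum_distrib_left)
  also have "\<dots> = (\<Sum>l<m. W (s + n) i l)" using Suc by simp
  also have "\<dots> = 1" using assms Suc by simp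
  finally show ?case .
qed

lemma consensus_bound:
  fixes v e :: "nat \<Rightarrow> nat \<Rightarrow> 'a::real_normed_vector"
  assumes m1: "m \<ge> 1"
    and Wn: "\<And>k i j. i < m \<Longrightarrow> j < m \<Longrightarrow> W k i j \<ge> 0"
    and Wr: "\<And>k i. i < m \<Longrightarrow> (\<Sum>j<m. W k i j) = 1"
    and upd: "\<And>k i. i < m \<Longrightarrow> v i (Suc k) = (\<Sum>j<m. W k i j *\<^sub>R (v j k + e j k))"
    and eb: "\<And>k j. j < m \<Longrightarrow> norm (e j k) \<le> p k"
    and lb: "\<And>i j. i < m \<Longrightarrow> j < m \<Longrightarrow> Wp W m s n i j \<ge> \<delta>"
  shows "diam m (\<lambda>i. v i (s + n)) \<le> (1 - real m * \<delta>) * diam m (\<lambda>i. v i s) + 2 * (\<Sum>k<n. p (s + k))"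
proof -
  define u where "u = (\<lambda>n' i. \<Sum>j<m. Wp W m s n' i j *\<^sub>R v j s)"
  have dev: "norm (v i (s + n') - u n' i) \<le> (\<Sum>k<n'. p (s + k))" if "i < m" for i n'
    using that
  proof (induction n' arbitrary: i)
    case 0
    have "(\<Sum>j<m. (if i = j then 1 else 0) *\<^sub>R v j s) = (\<Sum>j<m. if i = j then v j s else 0)"
      by (rule sum.cong) auto
    then show ?case using 0 by (simp add: u_def)
  next
    case (Suc n')
    have uS: "u (Suc n') i = (\<Sum>l<m. W (s + n') i l *\<^sub>R u n' l)"
    proof -
      have "u (Suc n') i = (\<Sum>j<m. \<Sum>l<m. (W (s + n') i l * Wp W m s n' l j) *\<^sub>R v j s)"
        unfolding u_def by (simp add: scaleR_sum_left)
      also have "\<dots> = (\<Sum>l<m. \<Sum>j<m. (W (s + n') i l * Wp W m s n' l j) *\<^sub>R v j s)" by (rule sum.swap)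
      also have "\<dots> = (\<Sum>l<m. W (s + n') i l *\<^sub>R u n' l)"
        unfolding u_def by (simp add: scaleR_sum_right)
      finally show ?thesis .
    qed
    have vS: "v i (s + Suc n') = (\<Sum>l<m. W (s + n') i l *\<^sub>R (v l (s + n') + e l (s + n')))"
      using upd[OF Suc.prems, of "s + n'"] by simp
    have "v i (s + Suc n') - u (Suc n') i
        = (\<Sum>l<m. W (s + n') i l *\<^sub>R ((v l (s + n') - u n' l) + e l (s + n')))"
      unfolding uS vS by (simp add: sum_subtractf[symmetric] scaleR_diff_right[symmetric] algebra_simps)
    then have "norm (v i (s + Suc n') - u (Suc n') i)
        \<le> (\<Sum>l<m. norm (W (s + n') i l *\<^sub>R ((v l (s + n') - u n' l) + e l (s + n'))))"
      by (metis norm_sum)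
    also have "\<dots> \<le> (\<Sum>l<m. W (s + n') i l * ((\<Sum>k<n'. p (s + k)) + p (s + n')))"
    proof (intro sum_mono)
      fix l assume l: "l \<in> {..<m}"
      have "norm ((v l (s + n') - u n' l) + e l (s + n')) \<le> (\<Sum>k<n'. p (s + k)) + p (s + n')"
        using Suc.IH[of l] eb[of l "s + n'"] l norm_triangle_ineq[of "v l (s + n') - u n' l" "e l (s + n')"]
        by auto
      then show "norm (W (s + n') i l *\<^sub>R ((v l (s + n') - u n' l) + e l (s + n')))
          \<le> W (s + n') i l * ((\<Sum>k<n'. p (s + k)) + p (s + n'))"
        using Wn[OF Suc.prems, of l "s + n'"] l by (simp add: mult_left_mono)
    qed
    also have "\<dots> = (\<Sum>k<Suc n'. p (s + k))"
      using Wr[OF Suc.prems, of "s + n'"] by (simp add: sum_distrib_right[symmetric])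
    finally show ?case .
  qed
  show ?thesis
  proof (rule diam_le[OF m1])
    fix i k assume ik: "i < m" "k < m"
    have "norm (v i (s + n) - v k (s + n))
        \<le> norm (u n i - u n k) + norm (v i (s + n) - u n i) + norm (v k (s + n) - u n k)"
    proof -
      have eq: "v i (s + n) - v k (s + n) = (u n i - u n k) + ((v i (s + n) - u n i) - (v k (s + n) - u n k))"
        by (simp add: algebra_simps)
      have "norm ((v i (s + n) - u n i) - (v k (s + n) - u n k)) \<le> norm (v i (s + n) - u n i) + norm (v k (s + n) - u n k)"
        by (rule norm_triangle_ineq4)
      then show ?thesis unfolding eq using norm_triangle_ineq[of "u n i - u n k" "(v i (s + n) - u n i) - (v k (s + n) - u n k)"]
        by linarith
    qed
    also have "norm (u n i - u n k) \<le> (1 - real m * \<delta>) * diam m (\<lambda>i. v i s)"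
      unfolding u_def by (rule stoch_contract) (use lb ik Wp_rows[OF Wr] in auto)
    finally show "norm (v i (s + n) - v k (s + n)) \<le> (1 - real m * \<delta>) * diam m (\<lambda>i. v i s) + 2 * (\<Sum>k<n. p (s + k))"
      using dev[OF ik(1), of n] dev[OF ik(2), of n] by simp
  qed
qed




lemma crossing:
  assumes "(r, q) \<in> Rel\<^sup>*" "r \<in> S" "q \<notin> S"
  shows "\<exists>k i. (k, i) \<in> Rel \<and> k \<in> S \<and> i \<notin> S"
proof -
  have "q \<in> S \<or> (\<exists>k i. (k, i) \<in> Rel \<and> k \<in> S \<and> i \<notin> S)"
    using assms(1)
  proof (induction rule: rtrancl_induct)
    case base then show ?case using assms(2) by simp
  next
    case (step y z) then show ?case by blast
  qed
  then show ?thesis using assms(3) by blast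
qed

lemma prod_positive:
  fixes M :: "nat \<Rightarrow> nat \<Rightarrow> nat \<Rightarrow> real"
  assumes m1: "m \<ge> 1" and Bp: "B > 0"
    and Mn: "\<And>k i j. i < m \<Longrightarrow> j < m \<Longrightarrow> M k i j \<ge> 0"
    and Md: "\<And>k i. i < m \<Longrightarrow> M k i i \<ge> \<gamma>"
    and Me: "\<And>k i j. i < m \<Longrightarrow> j < m \<Longrightarrow> j \<noteq> i \<Longrightarrow> (j, i) \<in> E k \<Longrightarrow> M k i j \<ge> \<gamma>"
    and g0: "0 < \<gamma>" and g1: "\<gamma> \<le> 1"
    and conn: "\<And>a. strongly_connected_digraph {..<m} (\<Union>t\<in>{a * B..<(a + 1) * B}. E t)"
    and i: "i < m" and j: "j < m"
  shows "Wp M m s (m * B) i j \<ge> \<gamma> ^ (m * B)"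
proof -
  define R where "R = (\<lambda>n. {i. i < m \<and> Wp M m s n i j \<ge> \<gamma> ^ n})"
  have Rsub: "R n \<subseteq> {..<m}" for n by (auto simp: R_def)
  have finR: "finite (R n)" for n using Rsub finite_subset by blast
  have nn: "Wp M m s n l j \<ge> 0" if "l < m" for n l using Wp_nonneg[of m M, OF Mn] that j by blast
  have term_le: "M (s + n) i' l * Wp M m s n l j \<le> Wp M m s (Suc n) i' j" if "l < m" "i' < m" for n i' l
  proof -
    have "M (s + n) i' l * Wp M m s n l j \<le> (\<Sum>l<m. M (s + n) i' l * Wp M m s n l j)"
      by (rule member_le_sum) (use that Mn nn in \<open>auto intro: mult_nonneg_nonneg\<close>)
    then show ?thesis by simp
  qed
  have step_edge: "i' \<in> R (Suc n)" if "l \<in> R n" "i' < m" "M (s + n) i' l \<ge> \<gamma>" for n i' l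
  proof -
    have l: "l < m" "Wp M m s n l j \<ge> \<gamma> ^ n" using that by (auto simp: R_def)
    have "\<gamma> ^ Suc n = \<gamma> * \<gamma> ^ n" by simp
    also have "\<dots> \<le> M (s + n) i' l * Wp M m s n l j"
      using l that g0 by (intro mult_mono) auto
    also have "\<dots> \<le> Wp M m s (Suc n) i' j" using term_le l that by blast
    finally show ?thesis using that by (simp add: R_def)
  qed
  have Rmono1: "R n \<subseteq> R (Suc n)" for n
    using step_edge Md by (auto simp: R_def)
  have Rmono: "R n \<subseteq> R n'" if "n \<le> n'" for n n'
    using that
  proof (induction n' rule: dec_induct)
    case (step n') then show ?case using Rmono1 by blast
  qed simp
  have j0: "j \<in> R 0" using j by (simp add: R_def)
  have grow: "card (R ((a + 1) * B - s)) > card (R (a * B - s))"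
    if sa: "s \<le> a * B" and ne: "R (a * B - s) \<noteq> {..<m}" for a
  proof -
    define R0 where "R0 = R (a * B - s)"
    have jR0: "j \<in> R0" using Rmono[of 0] j0 by (auto simp: R0_def)
    obtain q where q: "q < m" "q \<notin> R0" using ne Rsub unfolding R0_def by blast
    have "(j, q) \<in> ((\<Union>t\<in>{a * B..<(a + 1) * B}. E t) \<inter> {..<m} \<times> {..<m})\<^sup>*"
      using conn[of a] j q unfolding strongly_connected_digraph_def by blast
    then obtain k i' where ki: "(k, i') \<in> (\<Union>t\<in>{a * B..<(a + 1) * B}. E t) \<inter> {..<m} \<times> {..<m}"
      "k \<in> R0" "i' \<notin> R0"
      using crossing[OF _ jR0 q(2)] by blast
    then obtain t where t: "a * B \<le> t" "t < (a + 1) * B" "(k, i') \<in> E t" "k < m" "i' < m" by auto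
    have kt: "k \<in> R (t - s)" using ki(2) Rmono[of "a * B - s" "t - s"] diff_le_mono[OF t(1), of s] unfolding R0_def by blast
    have "M (s + (t - s)) i' k \<ge> \<gamma>"
      using Me[of i' k t] t ki(2,3) sa by auto
    then have "i' \<in> R (Suc (t - s))" using step_edge[OF kt t(5)] by blast
    moreover have "Suc (t - s) \<le> (a + 1) * B - s" using t(2) t(1) sa by linarith
    ultimately have i'R: "i' \<in> R ((a + 1) * B - s)" using Rmono by blast
    have "R0 \<subseteq> R ((a + 1) * B - s)" unfolding R0_def by (rule Rmono) simp
    then have "insert i' R0 \<subseteq> R ((a + 1) * B - s)" using i'R by blast
    then have "card (insert i' R0) \<le> card (R ((a + 1) * B - s))" by (intro card_mono finR)
    moreover have "card (insert i' R0) = Suc (card R0)" using ki(3) finR unfolding R0_def by simp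
    ultimately show ?thesis unfolding R0_def by simp
  qed
  define a0 where "a0 = s div B + 1"
  have a0s: "s \<le> a0 * B"
  proof -
    have e: "s = s div B * B + s mod B" by simp
    have "s mod B < B" using Bp by simp
    then have "s < s div B * B + B" using e by linarith
    then have "s < (s div B + 1) * B" by (simp add: algebra_simps)
    then show ?thesis by (simp add: a0_def)
  qed
  have cardk: "card (R ((a0 + k) * B - s)) \<ge> k + 1" if "k \<le> m - 1" for k
    using that
  proof (induction k)
    case 0
    have "j \<in> R (a0 * B - s)" using Rmono[of 0] j0 by auto
    then have "card (R (a0 * B - s)) \<ge> 1" using finR by (metis One_nat_def card_0_eq empty_iff less_one not_le)
    then show ?case by simp
  next
    case (Suc k)
    have sa: "s \<le> (a0 + k) * B" using a0s by (meson add_le_mono1 le_add1 mult_le_mono1 order_trans)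
    show ?case
    proof (cases "R ((a0 + k) * B - s) = {..<m}")
      case True
      have "R ((a0 + k) * B - s) \<subseteq> R ((a0 + Suc k) * B - s)" by (rule Rmono) simp
      then have "R ((a0 + Suc k) * B - s) = {..<m}" using True Rsub by blast
      then show ?thesis using Suc.prems by simp
    next
      case False
      have "card (R ((a0 + k + 1) * B - s)) > card (R ((a0 + k) * B - s))"
        by (rule grow[OF sa False])
      then show ?thesis using Suc by simp
    qed
  qed
  have "card (R ((a0 + (m - 1)) * B - s)) \<ge> m" using cardk[of "m - 1"] m1 by simp
  then have full: "R ((a0 + (m - 1)) * B - s) = {..<m}"
    using Rsub card_subset_eq[of "{..<m}"] card_mono[of "{..<m}"] by (metis card_lessThan finite_lessThan le_antisym)
  have "(a0 + (m - 1)) * B - s \<le> m * B"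
  proof -
    have "(s div B) * B \<le> s" by (metis div_mult_mod_eq le_add1)
    moreover have "(a0 + (m - 1)) * B = (s div B) * B + m * B" using m1 by (simp add: a0_def algebra_simps)
    ultimately show ?thesis by linarith
  qed
  then have "R (m * B) = {..<m}" using Rmono[of _ "m * B"] full Rsub by blast
  then show ?thesis using i by (auto simp: R_def)
qed




locale prob =
  fixes m :: nat
    and K Oset :: "'a::euclidean_space set"
    and f :: "nat \<Rightarrow> 'a \<Rightarrow> real"
    and gf :: "nat \<Rightarrow> 'a \<Rightarrow> 'a"
    and Hf :: "nat \<Rightarrow> 'a \<Rightarrow> 'a \<Rightarrow> 'a"
    and G :: "'a \<Rightarrow> real"
    and mu L :: real
    and E :: "nat \<Rightarrow> (nat \<times> nat) set"
    and B :: nat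
    and c :: "nat \<Rightarrow> nat \<Rightarrow> nat \<Rightarrow> real"
    and c_l :: real
    and ft :: "nat \<Rightarrow> 'a \<Rightarrow> 'a \<Rightarrow> real"
    and gft :: "nat \<Rightarrow> 'a \<Rightarrow> 'a \<Rightarrow> 'a"
    and Hft :: "nat \<Rightarrow> 'a \<Rightarrow> 'a \<Rightarrow> 'a \<Rightarrow> 'a"
    and mut Du :: "nat \<Rightarrow> real"
  assumes m_pos: "m \<ge> 1"
    and K_ne: "K \<noteq> {}" and K_convex: "convex K"
    and O_open: "open Oset" and K_sub_O: "K \<subseteq> Oset"
    and f_grad: "\<And>i x. i < m \<Longrightarrow> x \<in> Oset \<Longrightarrow> (f i has_derivative (\<lambda>h. gf i x \<bullet> h)) (at x)"
    and f_hess: "\<And>i x. i < m \<Longrightarrow> x \<in> Oset \<Longrightarrow> (gf i has_derivative Hf i x) (at x)"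
    and f_convex: "\<And>i. i < m \<Longrightarrow> convex_on Oset (f i)"
    and mu_pos: "mu > 0"
    and F_hess_bounds: "\<And>x h. x \<in> K \<Longrightarrow>
        mu * (norm h)\<^sup>2 \<le> ((1 / real m) *\<^sub>R (\<Sum>i<m. Hf i x h)) \<bullet> h \<and> ((1 / real m) *\<^sub>R (\<Sum>i<m. Hf i x h)) \<bullet> h \<le> L * (norm h)\<^sup>2"
    and G_convex: "convex_on K G"
    and B_pos: "B > 0"
    and B_conn: "\<And>k. strongly_connected_digraph {..<m} (\<Union>t\<in>{k * B..<(k + 1) * B}. E t)"
    and c_l_pos: "c_l > 0"
    and c_diag: "\<And>\<nu> i. i < m \<Longrightarrow> c \<nu> i i \<ge> c_l"
    and c_edge: "\<And>\<nu> i j. i < m \<Longrightarrow> j < m \<Longrightarrow> j \<noteq> i \<Longrightarrow> (j, i) \<in> E \<nu> \<Longrightarrow> c \<nu> i j \<ge> c_l"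
    and c_zero: "\<And>\<nu> i j. i < m \<Longrightarrow> j < m \<Longrightarrow> j \<noteq> i \<Longrightarrow> (j, i) \<notin> E \<nu> \<Longrightarrow> c \<nu> i j = 0"
    and c_colstoch: "\<And>\<nu> j. j < m \<Longrightarrow> (\<Sum>i<m. c \<nu> i j) = 1"
    and ft_grad: "\<And>i x y. i < m \<Longrightarrow> x \<in> Oset \<Longrightarrow> y \<in> Oset \<Longrightarrow>
        ((\<lambda>u. ft i u y) has_derivative (\<lambda>h. gft i x y \<bullet> h)) (at x)"
    and ft_hess: "\<And>i x y. i < m \<Longrightarrow> x \<in> Oset \<Longrightarrow> y \<in> Oset \<Longrightarrow>
        ((\<lambda>u. gft i u y) has_derivative Hft i x y) (at x)"
    and ft_grad_consistent: "\<And>i x. i < m \<Longrightarrow> x \<in> Oset \<Longrightarrow> gft i x x = gf i x"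
    and mut_pos: "\<And>i. i < m \<Longrightarrow> mut i > 0"
    and ft_strongly_convex: "\<And>i x. i < m \<Longrightarrow> x \<in> K \<Longrightarrow> strongly_convex_on (mut i) K (\<lambda>u. ft i u x)"
    and D_upper: "\<And>i x y h. i < m \<Longrightarrow> x \<in> K \<Longrightarrow> y \<in> K \<Longrightarrow>
        (Hft i x y h - (1 / real m) *\<^sub>R (\<Sum>i<m. Hf i x h)) \<bullet> h \<le> Du i * (norm h)\<^sup>2"
begin

definition HF where "HF x h = (1 / real m) *\<^sub>R (\<Sum>i<m. Hf i x h)"
definition gF where "gF x = (1 / real m) *\<^sub>R (\<Sum>i<m. gf i x)"
definition F where "F x = (1 / real m) * (\<Sum>i<m. f i x)"
definition U where "U x = (1 / real m) * (\<Sum>i<m. f i x) + G x"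

lemma U_F: "U x = F x + G x" by (simp add: U_def F_def)

lemma inO: "x \<in> K \<Longrightarrow> x \<in> Oset" using K_sub_O by blast

lemma HF_bounds: "x \<in> K \<Longrightarrow> mu * (norm h)\<^sup>2 \<le> HF x h \<bullet> h" "x \<in> K \<Longrightarrow> HF x h \<bullet> h \<le> L * (norm h)\<^sup>2"
  using F_hess_bounds unfolding HF_def by auto

lemma mu_le_L: "mu \<le> L"
proof -
  obtain x where x: "x \<in> K" using K_ne by blast
  obtain h :: 'a where h: "h \<in> Basis" using nonempty_Basis by blast
  then have "norm h = 1" by simp
  then show ?thesis using HF_bounds[OF x, of h] by simp
qed

lemma L_pos: "L > 0" using mu_le_L mu_pos by simp

lemma F_deriv: "x \<in> Oset \<Longrightarrow> (F has_derivative (\<lambda>h. gF x \<bullet> h)) (at x)"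
proof -
  assume x: "x \<in> Oset"
  have "((\<lambda>x. \<Sum>i<m. f i x) has_derivative (\<lambda>h. \<Sum>i<m. gf i x \<bullet> h)) (at x)"
    by (rule has_derivative_sum) (use f_grad x in auto)
  then have "((\<lambda>x. (1 / real m) * (\<Sum>i<m. f i x)) has_derivative (\<lambda>h. (1 / real m) * (\<Sum>i<m. gf i x \<bullet> h))) (at x)"
    by (rule has_derivative_mult_right)
  moreover have "(\<lambda>h. (1 / real m) * (\<Sum>i<m. gf i x \<bullet> h)) = (\<lambda>h. gF x \<bullet> h)"
    by (auto simp: gF_def inner_sum_left)
  ultimately show ?thesis unfolding F_def[abs_def] by simp
qed

lemma gF_deriv: "x \<in> Oset \<Longrightarrow> (gF has_derivative HF x) (at x)"
proof -
  assume x: "x \<in> Oset"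
  have "((\<lambda>x. \<Sum>i<m. gf i x) has_derivative (\<lambda>h. \<Sum>i<m. Hf i x h)) (at x)"
    by (rule has_derivative_sum) (use f_hess x in auto)
  then have "((\<lambda>x. (1 / real m) *\<^sub>R (\<Sum>i<m. gf i x)) has_derivative (\<lambda>h. (1 / real m) *\<^sub>R (\<Sum>i<m. Hf i x h))) (at x)"
    by (rule has_derivative_scaleR_right)
  then show ?thesis unfolding gF_def[abs_def] HF_def[abs_def] by simp
qed

lemma F_lower: "a \<in> K \<Longrightarrow> b \<in> K \<Longrightarrow> F a + gF a \<bullet> (b - a) + mu / 2 * (norm (b - a))\<^sup>2 \<le> F b"
  by (rule quad_lower[OF K_convex]) (use F_deriv gF_deriv K_sub_O HF_bounds in auto)

lemma F_upper: "a \<in> K \<Longrightarrow> b \<in> K \<Longrightarrow> F b \<le> F a + gF a \<bullet> (b - a) + L / 2 * (norm (b - a))\<^sup>2"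
  by (rule quad_upper[OF K_convex]) (use F_deriv gF_deriv K_sub_O HF_bounds in auto)

lemma Hf_psd: "i < m \<Longrightarrow> x \<in> Oset \<Longrightarrow> Hf i x h \<bullet> h \<ge> 0"
  by (rule hessian_psd[OF O_open _ f_convex f_grad f_hess]) auto

lemma Hf_sym: "i < m \<Longrightarrow> x \<in> Oset \<Longrightarrow> Hf i x h \<bullet> k = Hf i x k \<bullet> h"
  by (rule hessian_symmetric[OF O_open _ f_grad f_hess]) auto

definition Lf where "Lf = real m * L"

lemma Lf_pos: "Lf > 0" using L_pos m_pos by (simp add: Lf_def)

lemma Hf_norm: assumes i: "i < m" and x: "x \<in> K" shows "norm (Hf i x h) \<le> Lf * norm h"
proof (rule sym_psd_norm_bound)
  have xO: "x \<in> Oset" using x by (rule inO)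
  show "linear (Hf i x)" using f_hess[OF i xO] has_derivative_linear by blast
  show "\<And>u v. Hf i x u \<bullet> v = Hf i x v \<bullet> u" using Hf_sym[OF i xO] by blast
  show "\<And>u. 0 \<le> Hf i x u \<bullet> u" using Hf_psd[OF i xO] by blast
  fix u
  have "Hf i x u \<bullet> u \<le> (\<Sum>k<m. Hf k x u \<bullet> u)"
    by (rule member_le_sum) (use i Hf_psd xO in auto)
  also have "\<dots> = real m * (HF x u \<bullet> u)" using m_pos by (simp add: HF_def inner_sum_left)
  also have "\<dots> \<le> real m * (L * (norm u)\<^sup>2)" using HF_bounds(2)[OF x] by (simp add: mult_left_mono)
  finally show "Hf i x u \<bullet> u \<le> Lf * (norm u)\<^sup>2" by (simp add: Lf_def)
qed

lemma gf_lipschitz: "i < m \<Longrightarrow> a \<in> K \<Longrightarrow> b \<in> K \<Longrightarrow> norm (gf i a - gf i b) \<le> Lf * norm (a - b)"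
proof -
  assume i: "i < m" and a: "a \<in> K" and b: "b \<in> K"
  show ?thesis
  proof (rule differentiable_bound[OF K_convex _ _ a b])
    fix x assume x: "x \<in> K"
    then have xO: "x \<in> Oset" by (rule inO)
    show "(gf i has_derivative Hf i x) (at x within K)"
      using f_hess[OF i xO] by (rule has_derivative_at_withinI)
    show "onorm (Hf i x) \<le> Lf"
    proof (rule onorm_le)
      fix h show "norm (Hf i x h) \<le> Lf * norm h" by (rule Hf_norm[OF i x])
    qed
  qed
qed

lemma U_convex: "convex_on K U"
proof -
  have "convex_on K (\<lambda>x. \<Sum>i<n. f i x)" if "n \<le> m" for n
    using that
  proof (induction n)
    case 0 then show ?case using K_convex by (simp add: convex_on_const)
  next
    case (Suc n)
    have "convex_on K (f n)" using f_convex[of n] Suc.prems K_sub_O K_convex convex_on_subset by auto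
    then show ?case using Suc by (simp add: convex_on_add)
  qed
  then have "convex_on K (\<lambda>x. (1 / real m) * (\<Sum>i<m. f i x))" by (intro convex_on_cmul) auto
  then show ?thesis unfolding U_def[abs_def] using G_convex by (rule convex_on_add)
qed

lemma ft_upper:
  assumes i: "i < m" and x: "x \<in> K" and a: "a \<in> K" and b: "b \<in> K"
  shows "ft i b x \<le> ft i a x + gft i a x \<bullet> (b - a) + (L + Du i) / 2 * (norm (b - a))\<^sup>2"
proof (rule quad_upper[OF K_convex _ _ _ a b, where g = "\<lambda>u. gft i u x" and H = "\<lambda>u. Hft i u x"])
  fix u assume u: "u \<in> K"
  show "((\<lambda>u. ft i u x) has_derivative (\<lambda>v. gft i u x \<bullet> v)) (at u)"
    using ft_grad[OF i inO[OF u] inO[OF x]] .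
  show "((\<lambda>u. gft i u x) has_derivative Hft i u x) (at u)"
    using ft_hess[OF i inO[OF u] inO[OF x]] .
  fix h
  have "(Hft i u x h - HF u h) \<bullet> h \<le> Du i * (norm h)\<^sup>2"
    using D_upper[OF i u x, of h] unfolding HF_def .
  moreover have "HF u h \<bullet> h \<le> L * (norm h)\<^sup>2" using HF_bounds(2)[OF u] .
  ultimately show "Hft i u x h \<bullet> h \<le> (L + Du i) * (norm h)\<^sup>2"
    by (simp add: inner_diff_left algebra_simps)
qed

lemma ft_tangent:
  assumes i: "i < m" and x: "x \<in> K" and a: "a \<in> K" and b: "b \<in> K"
  shows "ft i a x + gft i a x \<bullet> (b - a) + mut i / 2 * (norm (b - a))\<^sup>2 \<le> ft i b x"
proof -
  define q where "q = (\<lambda>u. ft i u x - mut i / 2 * (norm u)\<^sup>2)"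
  have cv: "convex_on K q" using ft_strongly_convex[OF i x] unfolding strongly_convex_on_def q_def .
  have d: "(q has_derivative (\<lambda>v. (gft i u x - mut i *\<^sub>R u) \<bullet> v)) (at u)" if u: "u \<in> K" for u
  proof -
    have "((\<lambda>u. ft i u x) has_derivative (\<lambda>v. gft i u x \<bullet> v)) (at u)"
      using ft_grad[OF i inO[OF u] inO[OF x]] .
    moreover have "((\<lambda>u. (norm u)\<^sup>2) has_derivative (\<lambda>v. 2 * (u \<bullet> v))) (at u)"
    proof -
      have e1: "(\<lambda>u. (norm u)\<^sup>2) = (\<lambda>u. u \<bullet> u)" by (simp add: power2_norm_eq_inner)
      have e2: "(\<lambda>v. u \<bullet> v + v \<bullet> u) = (\<lambda>v. 2 * (u \<bullet> v))" by (rule ext) (simp add: inner_commute)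
      have d0: "((\<lambda>u. u \<bullet> u) has_derivative (\<lambda>v. u \<bullet> v + v \<bullet> u)) (at u)"
        by (rule has_derivative_inner) (rule has_derivative_ident)+
      show ?thesis unfolding e1 using d0 unfolding e2 .
    qed
    ultimately have "(q has_derivative (\<lambda>v. gft i u x \<bullet> v - mut i / 2 * (2 * (u \<bullet> v)))) (at u)"
      unfolding q_def by (intro has_derivative_diff has_derivative_mult_right)
    moreover have "(\<lambda>v. gft i u x \<bullet> v - mut i / 2 * (2 * (u \<bullet> v))) = (\<lambda>v. (gft i u x - mut i *\<^sub>R u) \<bullet> v)"
      by (auto simp: inner_diff_left)
    ultimately show ?thesis by simp
  qed
  have "q a + (gft i a x - mut i *\<^sub>R a) \<bullet> (b - a) \<le> q b"
    by (rule convex_tangent[OF cv d a b])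
  moreover have nb: "(norm (b - a))\<^sup>2 = (norm b)\<^sup>2 - 2 * (a \<bullet> b) + (norm a)\<^sup>2"
    by (simp add: power2_norm_eq_inner inner_diff_left inner_diff_right inner_commute)
  then have "mut i / 2 * (norm (b - a))\<^sup>2 = mut i / 2 * (norm b)\<^sup>2 - mut i * (a \<bullet> b) + mut i / 2 * (norm a)\<^sup>2"
    by (simp add: right_diff_distrib distrib_left)
  moreover have "(gft i a x - mut i *\<^sub>R a) \<bullet> (b - a) = gft i a x \<bullet> (b - a) - mut i * (a \<bullet> b) + mut i * (norm a)\<^sup>2"
    by (simp add: inner_diff_left inner_diff_right power2_norm_eq_inner)
  ultimately show ?thesis unfolding q_def by linarith
qed

end



context prob begin

lemma c_nonneg: "i < m \<Longrightarrow> j < m \<Longrightarrow> c \<nu> i j \<ge> 0"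
proof -
  assume ij: "i < m" "j < m"
  show ?thesis
  proof (cases "j = i")
    case True then show ?thesis using c_diag[OF ij(1), of \<nu>] c_l_pos by simp
  next
    case False
    show ?thesis
    proof (cases "(j, i) \<in> E \<nu>")
      case True then show ?thesis using c_edge[OF ij False, of \<nu>] c_l_pos by simp
    next
      case nE: False then show ?thesis using c_zero[OF ij False nE] by simp
    qed
  qed
qed

lemma c_l_le1: "c_l \<le> 1"
proof -
  have z: "0 < m" using m_pos by simp
  have "c 0 0 0 \<le> (\<Sum>i<m. c 0 i 0)"
    by (rule member_le_sum) (use z c_nonneg in auto)
  also have "\<dots> = 1" using c_colstoch[OF z] .
  finally show ?thesis using c_diag[OF z, of 0] by simp
qed

definition T where "T = m * B"
definition eta where "eta = c_l ^ T"
definition gW where "gW = c_l * eta / real m"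
definition dlt where "dlt = gW ^ T"
definition rho where "rho = 1 - real m * dlt"

lemma T_pos: "T > 0" using m_pos B_pos by (simp add: T_def)
lemma eta_pos: "eta > 0" using c_l_pos by (simp add: eta_def)
lemma eta_le1: "eta \<le> 1" using c_l_pos c_l_le1 by (simp add: eta_def power_le_one)
lemma gW_pos: "gW > 0" using c_l_pos eta_pos m_pos by (simp add: gW_def)
lemma gW_le1: "gW \<le> 1"
proof -
  have "c_l * eta \<le> 1 * 1" using c_l_pos c_l_le1 eta_pos eta_le1 by (intro mult_mono) auto
  also have "\<dots> \<le> real m" using m_pos by simp
  finally show ?thesis using m_pos by (simp add: gW_def divide_le_eq)
qed
lemma dlt_pos: "dlt > 0" using gW_pos by (simp add: dlt_def)

lemma c_prod_lb: "i < m \<Longrightarrow> j < m \<Longrightarrow> Wp c m s T i j \<ge> eta"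
  unfolding T_def eta_def
  by (rule prod_positive[OF m_pos B_pos _ _ _ c_l_pos c_l_le1 B_conn]) (use c_nonneg c_diag c_edge in auto)

end

locale run = prob +
  fixes alpha :: real
    and x xhalf xhat y :: "nat \<Rightarrow> nat \<Rightarrow> 'a"
    and phi :: "nat \<Rightarrow> nat \<Rightarrow> real"
  assumes alpha_pos: "0 < alpha" and alpha_le1: "alpha \<le> 1"
    and x_init: "\<And>i. i < m \<Longrightarrow> x i 0 \<in> K"
    and y_init: "\<And>i. i < m \<Longrightarrow> y i 0 = gf i (x i 0)"
    and phi_init: "\<And>i. i < m \<Longrightarrow> phi i 0 = 1"
    and xhat_K: "\<And>i \<nu>. i < m \<Longrightarrow> xhat i \<nu> \<in> K"
    and xhat_opt: "\<And>i \<nu> z. i < m \<Longrightarrow> z \<in> K \<Longrightarrow>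
          ft i (xhat i \<nu>) (x i \<nu>) + (y i \<nu> - gf i (x i \<nu>)) \<bullet> (xhat i \<nu> - x i \<nu>) + G (xhat i \<nu>)
                 \<le> ft i z (x i \<nu>) + (y i \<nu> - gf i (x i \<nu>)) \<bullet> (z - x i \<nu>) + G z"
    and xhalf_def: "\<And>i \<nu>. i < m \<Longrightarrow> xhalf i \<nu> = x i \<nu> + alpha *\<^sub>R (xhat i \<nu> - x i \<nu>)"
    and phi_upd: "\<And>i \<nu>. i < m \<Longrightarrow> phi i (Suc \<nu>) = (\<Sum>j<m. c \<nu> i j * phi j \<nu>)"
    and x_upd: "\<And>i \<nu>. i < m \<Longrightarrow> x i (Suc \<nu>) = (1 / phi i (Suc \<nu>)) *\<^sub>R (\<Sum>j<m. (c \<nu> i j * phi j \<nu>) *\<^sub>R xhalf j \<nu>)"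
    and y_upd: "\<And>i \<nu>. i < m \<Longrightarrow> y i (Suc \<nu>) = (1 / phi i (Suc \<nu>)) *\<^sub>R
          (\<Sum>j<m. c \<nu> i j *\<^sub>R (phi j \<nu> *\<^sub>R y j \<nu> + gf j (x j (Suc \<nu>)) - gf j (x j \<nu>)))"
begin

lemma phi_nonneg: "i < m \<Longrightarrow> phi i \<nu> \<ge> 0"
proof (induction \<nu> arbitrary: i)
  case 0 then show ?case using phi_init by simp
next
  case (Suc \<nu>) then show ?case using phi_upd c_nonneg by (auto intro!: sum_nonneg mult_nonneg_nonneg)
qed

lemma phi_sum: "(\<Sum>i<m. phi i \<nu>) = real m"
proof (induction \<nu>)
  case 0 then show ?case using phi_init by simp
next
  case (Suc \<nu>)
  have "(\<Sum>i<m. phi i (Suc \<nu>)) = (\<Sum>i<m. \<Sum>j<m. c \<nu> i j * phi j \<nu>)" using phi_upd by simp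
  also have "\<dots> = (\<Sum>j<m. \<Sum>i<m. c \<nu> i j * phi j \<nu>)" by (rule sum.swap)
  also have "\<dots> = (\<Sum>j<m. (\<Sum>i<m. c \<nu> i j) * phi j \<nu>)" by (simp add: sum_distrib_right)
  also have "\<dots> = (\<Sum>j<m. phi j \<nu>)" using c_colstoch by simp
  finally show ?case using Suc by simp
qed

lemma phi_le: "i < m \<Longrightarrow> phi i \<nu> \<le> real m"
proof -
  assume i: "i < m"
  have "phi i \<nu> \<le> (\<Sum>i<m. phi i \<nu>)" by (rule member_le_sum) (use i phi_nonneg in auto)
  then show ?thesis using phi_sum by simp
qed

lemma phi_prod: "i < m \<Longrightarrow> phi i (s + n) = (\<Sum>j<m. Wp c m s n i j * phi j s)"
proof (induction n arbitrary: i)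
  case 0
  have "(\<Sum>j<m. (if i = j then 1 else 0) * phi j s) = (\<Sum>j<m. if i = j then phi j s else 0)"
    by (rule sum.cong) auto
  then show ?case using 0 by simp
next
  case (Suc n)
  have "phi i (s + Suc n) = (\<Sum>l<m. c (s + n) i l * phi l (s + n))" using phi_upd[OF Suc.prems] by simp
  also have "\<dots> = (\<Sum>l<m. c (s + n) i l * (\<Sum>j<m. Wp c m s n l j * phi j s))" using Suc.IH by simp
  also have "\<dots> = (\<Sum>l<m. \<Sum>j<m. c (s + n) i l * Wp c m s n l j * phi j s)"
    by (simp add: sum_distrib_left mult.assoc)
  also have "\<dots> = (\<Sum>j<m. \<Sum>l<m. c (s + n) i l * Wp c m s n l j * phi j s)" by (rule sum.swap)
  also have "\<dots> = (\<Sum>j<m. Wp c m s (Suc n) i j * phi j s)" by (simp add: sum_distrib_right)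
  finally show ?case .
qed

lemma phi_ge_pow: "i < m \<Longrightarrow> phi i \<nu> \<ge> c_l ^ \<nu>"
proof (induction \<nu> arbitrary: i)
  case 0 then show ?case using phi_init by simp
next
  case (Suc \<nu>)
  have "c \<nu> i i * phi i \<nu> \<le> (\<Sum>j<m. c \<nu> i j * phi j \<nu>)"
    by (rule member_le_sum[of i "{..<m}" "\<lambda>j. c \<nu> i j * phi j \<nu>"]) (use Suc.prems c_nonneg phi_nonneg in auto)
  moreover have "c_l * c_l ^ \<nu> \<le> c \<nu> i i * phi i \<nu>"
    using c_diag[OF Suc.prems, of \<nu>] Suc.IH[OF Suc.prems] c_l_pos by (intro mult_mono) auto
  ultimately show ?case using phi_upd[OF Suc.prems] by simp
qed

lemma phi_lb: "i < m \<Longrightarrow> phi i \<nu> \<ge> eta"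
proof -
  assume i: "i < m"
  show ?thesis
  proof (cases "\<nu> \<le> T")
    case True
    have "eta \<le> c_l ^ \<nu>" unfolding eta_def using True c_l_pos c_l_le1 by (intro power_decreasing) auto
    then show ?thesis using phi_ge_pow[OF i, of \<nu>] by simp
  next
    case False
    then obtain s where s: "\<nu> = s + T" by (metis add.commute le_add_diff_inverse nat_le_linear)
    have "(\<Sum>j<m. eta * phi j s) \<le> (\<Sum>j<m. Wp c m s T i j * phi j s)"
      by (intro sum_mono mult_right_mono) (use c_prod_lb[OF i] phi_nonneg in auto)
    also have "\<dots> = phi i \<nu>" using phi_prod[OF i] s by simp
    finally have "eta * real m \<le> phi i \<nu>" by (simp add: sum_distrib_left[symmetric] phi_sum)
    moreover have "eta \<le> eta * real m" using eta_pos m_pos by simp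
    ultimately show ?thesis by simp
  qed
qed

lemma phi_pos: "i < m \<Longrightarrow> phi i \<nu> > 0" using phi_lb eta_pos by (meson less_le_trans)

end



context run begin

definition W where "W k i j = c k i j * phi j k / phi i (Suc k)"

lemma W_nonneg: "i < m \<Longrightarrow> j < m \<Longrightarrow> W k i j \<ge> 0"
  unfolding W_def using c_nonneg phi_nonneg phi_pos by (simp add: divide_nonneg_pos)

lemma W_rows: "i < m \<Longrightarrow> (\<Sum>j<m. W k i j) = 1"
proof -
  assume i: "i < m"
  have "(\<Sum>j<m. W k i j) = (\<Sum>j<m. c k i j * phi j k) / phi i (Suc k)"
    unfolding W_def by (simp add: sum_divide_distrib)
  also have "\<dots> = 1" using phi_upd[OF i, of k] phi_pos[OF i, of "Suc k"] by simp
  finally show ?thesis .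
qed

lemma W_lb: assumes i: "i < m" and j: "j < m" and cj: "c k i j \<ge> c_l" shows "W k i j \<ge> gW"
proof -
  have "c_l * eta \<le> c k i j * phi j k" using cj phi_lb[OF j] c_l_pos eta_pos by (intro mult_mono) auto
  moreover have "phi i (Suc k) \<le> real m" by (rule phi_le[OF i])
  moreover have "phi i (Suc k) > 0" by (rule phi_pos[OF i])
  moreover have "c_l * eta \<ge> 0" using c_l_pos eta_pos by simp
  ultimately have "c_l * eta / real m \<le> c k i j * phi j k / phi i (Suc k)"
    by (meson frac_le order.trans order_refl)
  then show ?thesis by (simp add: W_def gW_def)
qed

lemma W_prod_lb: "i < m \<Longrightarrow> j < m \<Longrightarrow> Wp W m s T i j \<ge> dlt"
  unfolding T_def dlt_def
  by (rule prod_positive[OF m_pos B_pos _ _ _ gW_pos gW_le1 B_conn])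
     (use W_nonneg W_lb c_diag c_edge in auto)

lemma m_dlt_le1: "real m * dlt \<le> 1"
proof -
  have z: "0 < m" using m_pos by simp
  have "(\<Sum>j<m. dlt) \<le> (\<Sum>j<m. Wp W m 0 T 0 j)" by (intro sum_mono) (use W_prod_lb z in auto)
  also have "\<dots> = 1" by (rule Wp_rows[OF W_rows z])
  finally show ?thesis by simp
qed

lemma rho_nonneg: "rho \<ge> 0" using m_dlt_le1 by (simp add: rho_def)
lemma rho_lt1: "rho < 1" using dlt_pos m_pos by (simp add: rho_def)

lemma x_upd_W: "i < m \<Longrightarrow> x i (Suc k) = (\<Sum>j<m. W k i j *\<^sub>R (x j k + alpha *\<^sub>R (xhat j k - x j k)))"
proof -
  assume i: "i < m"
  have "x i (Suc k) = (\<Sum>j<m. (1 / phi i (Suc k)) *\<^sub>R ((c k i j * phi j k) *\<^sub>R xhalf j k))"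
    using x_upd[OF i] by (simp add: scaleR_sum_right)
  also have "\<dots> = (\<Sum>j<m. W k i j *\<^sub>R (x j k + alpha *\<^sub>R (xhat j k - x j k)))"
    by (rule sum.cong) (auto simp: W_def xhalf_def)
  finally show ?thesis .
qed

lemma y_upd_W: "i < m \<Longrightarrow> y i (Suc k) =
   (\<Sum>j<m. W k i j *\<^sub>R (y j k + (1 / phi j k) *\<^sub>R (gf j (x j (Suc k)) - gf j (x j k))))"
proof -
  assume i: "i < m"
  have "y i (Suc k) = (\<Sum>j<m. (1 / phi i (Suc k)) *\<^sub>R (c k i j *\<^sub>R (phi j k *\<^sub>R y j k + gf j (x j (Suc k)) - gf j (x j k))))"
    using y_upd[OF i] by (simp add: scaleR_sum_right)
  also have "\<dots> = (\<Sum>j<m. W k i j *\<^sub>R (y j k + (1 / phi j k) *\<^sub>R (gf j (x j (Suc k)) - gf j (x j k))))"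
  proof (rule sum.cong)
    fix j assume j: "j \<in> {..<m}"
    have pj: "phi j k \<noteq> 0" using phi_pos[of j k] j by simp
    have "phi j k *\<^sub>R y j k + gf j (x j (Suc k)) - gf j (x j k)
        = phi j k *\<^sub>R (y j k + (1 / phi j k) *\<^sub>R (gf j (x j (Suc k)) - gf j (x j k)))"
      using pj by (simp add: scaleR_add_right)
    then show "(1 / phi i (Suc k)) *\<^sub>R (c k i j *\<^sub>R (phi j k *\<^sub>R y j k + gf j (x j (Suc k)) - gf j (x j k)))
        = W k i j *\<^sub>R (y j k + (1 / phi j k) *\<^sub>R (gf j (x j (Suc k)) - gf j (x j k)))"
      by (simp add: W_def)
  qed simp
  finally show ?thesis .
qed

lemma x_K: "i < m \<Longrightarrow> x i \<nu> \<in> K" and xhalf_K: "i < m \<Longrightarrow> xhalf i \<nu> \<in> K"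
proof -
  have xh: "xhalf i \<nu> \<in> K" if "i < m" "x i \<nu> \<in> K" for i \<nu>
  proof -
    have "xhalf i \<nu> = (1 - alpha) *\<^sub>R x i \<nu> + alpha *\<^sub>R xhat i \<nu>"
      using xhalf_def[OF that(1)] by (simp add: algebra_simps)
    then show ?thesis using K_convex that xhat_K alpha_pos alpha_le1 by (simp add: convex_def)
  qed
  have x: "x i \<nu> \<in> K" if "i < m" for i
    using that
  proof (induction \<nu> arbitrary: i)
    case 0 then show ?case using x_init by simp
  next
    case (Suc \<nu>)
    have "x i (Suc \<nu>) = (\<Sum>j<m. W \<nu> i j *\<^sub>R xhalf j \<nu>)"
      using x_upd_W[OF Suc.prems] xhalf_def by simp
    also have "\<dots> \<in> K"
      by (rule convex_sum) (use K_convex W_rows[OF Suc.prems] W_nonneg Suc.prems xh Suc.IH in auto)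
    finally show ?case .
  qed
  show "i < m \<Longrightarrow> x i \<nu> \<in> K" by (rule x)
  show "i < m \<Longrightarrow> xhalf i \<nu> \<in> K" using x xh by blast
qed

lemma track: "(\<Sum>i<m. phi i k *\<^sub>R y i k) = (\<Sum>i<m. gf i (x i k))"
proof (induction k)
  case 0 then show ?case using phi_init y_init by simp
next
  case (Suc k)
  have "(\<Sum>i<m. phi i (Suc k) *\<^sub>R y i (Suc k))
      = (\<Sum>i<m. \<Sum>j<m. c k i j *\<^sub>R (phi j k *\<^sub>R y j k + gf j (x j (Suc k)) - gf j (x j k)))"
  proof (rule sum.cong)
    fix i assume i: "i \<in> {..<m}"
    have "phi i (Suc k) \<noteq> 0" using phi_pos[of i "Suc k"] i by simp
    then show "phi i (Suc k) *\<^sub>R y i (Suc k) = (\<Sum>j<m. c k i j *\<^sub>R (phi j k *\<^sub>R y j k + gf j (x j (Suc k)) - gf j (x j k)))"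
      using y_upd i by simp
  qed simp
  also have "\<dots> = (\<Sum>j<m. \<Sum>i<m. c k i j *\<^sub>R (phi j k *\<^sub>R y j k + gf j (x j (Suc k)) - gf j (x j k)))"
    by (rule sum.swap)
  also have "\<dots> = (\<Sum>j<m. (phi j k *\<^sub>R y j k + gf j (x j (Suc k)) - gf j (x j k)))"
    by (simp add: scaleR_sum_left[symmetric] c_colstoch)
  also have "\<dots> = (\<Sum>j<m. phi j k *\<^sub>R y j k) + (\<Sum>j<m. gf j (x j (Suc k))) - (\<Sum>j<m. gf j (x j k))"
    by (simp add: sum.distrib sum_subtractf)
  finally show ?case using Suc by simp
qed

end



lemma lin_Q:
  fixes gd ed Gh N2 A1 A2 P Gt Gx TGx TGw Z4 R1 TFw TFx Z2 N4 R2 :: real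
  assumes "gd + ed + Gh + N2 \<le> A1 + A2 + P + Gt" "Gt \<le> Gx - TGx + TGw" "A2 \<le> Z4 + R1" "P \<le> Z4"
    "A1 \<le> TFw - TFx - Z2" "- ed \<le> N4 + R2" "Z2 = 2 * Z4" "N2 = 2 * N4"
  shows "gd + Gh - Gx \<le> TFw + TGw - TFx - TGx - N4 + R1 + R2"
  using assms by linarith

lemma lin_F:
  fixes Fh Fx AG LN Gh2 Gx AGx AGh ATU ATx AN4 AR A8 AR' :: real
  assumes "Fh \<le> Fx + AG + LN" "Gh2 \<le> Gx - AGx + AGh" "AG + AGh - AGx \<le> ATU - ATx - AN4 + AR"
    "LN \<le> A8" "2 * A8 \<le> AN4" "AR \<le> AR'"
  shows "Fh + Gh2 \<le> Fx + Gx - ATx + ATU - A8 + AR'"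
  using assms by linarith

lemma descent_core:
  fixes gd ed Gh mj nd tt gw ew Lj nw Gt Gx Gw Fx Fw mu Fh al L Gh2 ne mmin :: real
  assumes h1: "gd + ed + Gh + mj / 2 * nd \<le> tt * (gw + ew) + Lj / 2 * tt\<^sup>2 * nw + Gt"
    and h2: "Gt \<le> (1 - tt) * Gx + tt * Gw"
    and h3: "Fx + gw + mu / 2 * nw \<le> Fw"
    and h4: "Fh \<le> Fx + al * gd + L / 2 * al\<^sup>2 * nd"
    and h5: "Gh2 \<le> (1 - al) * Gx + al * Gh"
    and h6: "ew \<le> mu / 4 * nw + ne / mu"
    and h7: "- ed \<le> mj / 4 * nd + ne / mj"
    and h8: "Lj * tt \<le> mu / 2" "0 < tt" "tt \<le> 1" "0 < mmin" "mmin \<le> mj" "al * L \<le> mmin / 4" "0 < al"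
       "0 \<le> nw" "0 \<le> nd" "0 \<le> ne" "0 < mu"
  shows "Fh + Gh2 \<le> (1 - al * tt) * (Fx + Gx) + al * tt * (Fw + Gw) - al * (mmin / 8) * nd + al * (1 / mu + 1 / mmin) * ne"
proof -
  have a: "tt * ew \<le> tt * (mu / 4 * nw + ne / mu)" using h6 h8 by (intro mult_left_mono) auto
  have b: "(Lj * tt) * (tt * nw) \<le> (mu / 2) * (tt * nw)" using h8 by (intro mult_right_mono) auto
  have c: "tt * gw \<le> tt * (Fw - Fx - mu / 2 * nw)" using h3 h8 by (intro mult_left_mono) auto
  have Q: "gd + Gh - Gx \<le> tt * Fw + tt * Gw - tt * Fx - tt * Gx - mj / 4 * nd + (tt / mu * ne) + ne / mj"
  proof (rule lin_Q)
    show "gd + ed + Gh + mj / 2 * nd \<le> tt * gw + tt * ew + Lj / 2 * tt\<^sup>2 * nw + Gt"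
      using h1 by (simp add: distrib_left)
    show "Gt \<le> Gx - tt * Gx + tt * Gw" using h2 by (simp add: algebra_simps)
    show "tt * ew \<le> mu / 4 * (tt * nw) + tt / mu * ne" using a by (simp add: algebra_simps)
    show "Lj / 2 * tt\<^sup>2 * nw \<le> mu / 4 * (tt * nw)"
    proof -
      have "Lj / 2 * tt\<^sup>2 * nw = ((Lj * tt) * (tt * nw)) / 2" by (simp add: power2_eq_square)
      also have "\<dots> \<le> ((mu / 2) * (tt * nw)) / 2" using b by (rule divide_right_mono) simp
      also have "\<dots> = mu / 4 * (tt * nw)" by simp
      finally show ?thesis .
    qed
    show "tt * gw \<le> tt * Fw - tt * Fx - mu / 2 * (tt * nw)" using c by (simp add: algebra_simps)
    show "- ed \<le> mj / 4 * nd + ne / mj" by (rule h7)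
    show "mu / 2 * (tt * nw) = 2 * (mu / 4 * (tt * nw))" by simp
    show "mj / 2 * nd = 2 * (mj / 4 * nd)" by simp
  qed
  have Qa: "al * (gd + Gh - Gx) \<le> al * (tt * Fw + tt * Gw - tt * Fx - tt * Gx - mj / 4 * nd + (tt / mu * ne) + ne / mj)"
    using Q h8 by (intro mult_left_mono) auto
  have nd1: "al * (L / 2 * al * nd) \<le> al * (mmin / 8 * nd)"
  proof -
    have "L / 2 * al * nd \<le> mmin / 8 * nd" using h8 by (intro mult_right_mono) (auto simp: mult.commute)
    then show ?thesis using h8 by (intro mult_left_mono) auto
  qed
  have nd2: "al * (mmin / 4 * nd) \<le> al * (mj / 4 * nd)" using h8 by (intro mult_left_mono mult_right_mono) auto
  have ne1: "al * ((tt / mu + 1 / mj) * ne) \<le> al * ((1 / mu + 1 / mmin) * ne)"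
  proof -
    have "tt / mu \<le> 1 / mu" using h8 by (simp add: divide_right_mono)
    moreover have "1 / mj \<le> 1 / mmin" using h8 by (simp add: frac_le)
    ultimately show ?thesis using h8 by (intro mult_left_mono mult_right_mono) auto
  qed
  have "Fh + Gh2 \<le> Fx + Gx - al * tt * (Fx + Gx) + al * tt * (Fw + Gw) - al * (mmin / 8 * nd) + al * ((1 / mu + 1 / mmin) * ne)"
  proof (rule lin_F)
    show "Fh \<le> Fx + al * gd + al * (L / 2 * al * nd)" using h4 by (simp add: power2_eq_square algebra_simps)
    show "Gh2 \<le> Gx - al * Gx + al * Gh" using h5 by (simp add: algebra_simps)
    show "al * gd + al * Gh - al * Gx \<le> al * tt * (Fw + Gw) - al * tt * (Fx + Gx) - al * (mj / 4 * nd) + al * ((tt / mu + 1 / mj) * ne)"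
      using Qa by (simp add: algebra_simps)
    show "al * (L / 2 * al * nd) \<le> al * (mmin / 8 * nd)" by (rule nd1)
    show "2 * (al * (mmin / 8 * nd)) \<le> al * (mj / 4 * nd)" using nd2 by simp
    show "al * ((tt / mu + 1 / mj) * ne) \<le> al * ((1 / mu + 1 / mmin) * ne)" by (rule ne1)
  qed
  then show ?thesis by (simp add: algebra_simps)
qed




lemma young: fixes a b k :: real assumes "0 < k" shows "a * b \<le> k / 4 * a\<^sup>2 + b\<^sup>2 / k"
proof -
  have "0 \<le> (k * a - 2 * b)\<^sup>2 / (4 * k)" using assms by simp
  also have "(k * a - 2 * b)\<^sup>2 / (4 * k) = k / 4 * a\<^sup>2 + b\<^sup>2 / k - a * b"
    using assms by (simp add: power2_eq_square field_simps)
  finally show ?thesis by simp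
qed

lemma inner_young: fixes u v :: "'a::real_inner" assumes "0 < k"
  shows "u \<bullet> v \<le> k / 4 * (norm v)\<^sup>2 + (norm u)\<^sup>2 / k"
proof -
  have "u \<bullet> v \<le> norm u * norm v" by (rule norm_cauchy_schwarz)
  also have "\<dots> = norm v * norm u" by simp
  also have "\<dots> \<le> k / 4 * (norm v)\<^sup>2 + (norm u)\<^sup>2 / k" by (rule young[OF assms])
  finally show ?thesis .
qed

context prob begin

definition Sd where "Sd = (\<Sum>i<m. \<bar>L + Du i\<bar>)"
definition tt where "tt = mu / (2 * (mu + Sd))"
definition mmin where "mmin = Min (mut ` {..<m})"

lemma Sd_nonneg: "Sd \<ge> 0" by (simp add: Sd_def sum_nonneg)
lemma tt_pos: "tt > 0" using mu_pos Sd_nonneg by (simp add: tt_def)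
lemma tt_le1: "tt \<le> 1"
proof -
  have "mu \<le> 2 * (mu + Sd)" using mu_pos Sd_nonneg by simp
  then show ?thesis using mu_pos Sd_nonneg by (simp add: tt_def divide_le_eq)
qed
lemma Lj_tt: assumes i: "i < m" shows "(L + Du i) * tt \<le> mu / 2"
proof -
  have "L + Du i \<le> \<bar>L + Du i\<bar>" by simp
  also have "\<dots> \<le> Sd" unfolding Sd_def by (rule member_le_sum) (use i in auto)
  also have "\<dots> \<le> mu + Sd" using mu_pos by simp
  finally have "(L + Du i) * tt \<le> (mu + Sd) * tt" using tt_pos by (intro mult_right_mono) auto
  also have "\<dots> = mu / 2"
  proof -
    have p: "mu + Sd \<noteq> 0" using mu_pos Sd_nonneg by linarith
    have p2: "2 * mu + 2 * Sd \<noteq> 0" using p by simp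
    show ?thesis unfolding tt_def using p p2 by (simp add: field_simps)
  qed
  finally show ?thesis .
qed

lemma mmin_le: "i < m \<Longrightarrow> mmin \<le> mut i" unfolding mmin_def by (rule Min_le) auto
lemma mmin_pos: "mmin > 0"
proof -
  have "mmin \<in> mut ` {..<m}" unfolding mmin_def using m_pos by (intro Min_in) (auto simp: lessThan_empty_iff)
  then show ?thesis using mut_pos by auto
qed

end

context run begin

lemma node_descent:
  assumes j: "j < m" and w: "w \<in> K" and small: "alpha * L \<le> mmin / 4"
  shows "U (xhalf j k) \<le> (1 - alpha * tt) * U (x j k) + alpha * tt * U w
          - alpha * (mmin / 8) * (norm (xhat j k - x j k))\<^sup>2
          + alpha * (1 / mu + 1 / mmin) * (norm (y j k - gF (x j k)))\<^sup>2"
proof -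
  define xk where "xk = x j k"
  define xh where "xh = xhat j k"
  define d where "d = xh - xk"
  define e where "e = y j k - gF xk"
  define wt where "wt = xk + tt *\<^sub>R (w - xk)"
  define gj where "gj = gf j xk"
  have xk: "xk \<in> K" unfolding xk_def using x_K[OF j] .
  have xh: "xh \<in> K" unfolding xh_def using xhat_K[OF j] .
  have wt_eq: "wt = (1 - tt) *\<^sub>R xk + tt *\<^sub>R w" by (simp add: wt_def algebra_simps)
  have wt: "wt \<in> K" unfolding wt_eq using K_convex xk w tt_pos tt_le1 by (simp add: convex_def)
  have xhalf_eq: "xhalf j k = xk + alpha *\<^sub>R d" unfolding xhalf_def[OF j] xk_def d_def xh_def ..
  have xhalf_eq2: "xhalf j k = (1 - alpha) *\<^sub>R xk + alpha *\<^sub>R xh" unfolding xhalf_eq d_def by (simp add: algebra_simps)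
  have xhalf: "xhalf j k \<in> K" using xhalf_K[OF j] .
  have y_eq: "y j k = gF xk + e" by (simp add: e_def)
  have opt: "ft j xh xk + (y j k - gj) \<bullet> d + G xh \<le> ft j wt xk + (y j k - gj) \<bullet> (wt - xk) + G wt"
    using xhat_opt[OF j wt, of k] unfolding xk_def xh_def d_def gj_def .
  have S1: "ft j xk xk + gj \<bullet> d + mut j / 2 * (norm d)\<^sup>2 \<le> ft j xh xk"
    using ft_tangent[OF j xk xk xh] ft_grad_consistent[OF j inO[OF xk]] unfolding d_def gj_def by simp
  have S2: "ft j wt xk \<le> ft j xk xk + gj \<bullet> (wt - xk) + (L + Du j) / 2 * (norm (wt - xk))\<^sup>2"
    using ft_upper[OF j xk xk wt] ft_grad_consistent[OF j inO[OF xk]] unfolding gj_def by simp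
  have nwt: "(norm (wt - xk))\<^sup>2 = tt\<^sup>2 * (norm (w - xk))\<^sup>2"
    using tt_pos by (simp add: wt_def power_mult_distrib)
  have ywt: "(y j k) \<bullet> (wt - xk) = tt * (gF xk \<bullet> (w - xk) + e \<bullet> (w - xk))"
    by (simp add: wt_def y_eq inner_add_left algebra_simps)
  have yd: "y j k \<bullet> d = gF xk \<bullet> d + e \<bullet> d" by (simp add: y_eq inner_add_left)
  have h1: "gF xk \<bullet> d + e \<bullet> d + G xh + mut j / 2 * (norm d)\<^sup>2
      \<le> tt * (gF xk \<bullet> (w - xk) + e \<bullet> (w - xk)) + (L + Du j) / 2 * tt\<^sup>2 * (norm (w - xk))\<^sup>2 + G wt"
  proof -
    have "(y j k - gj) \<bullet> d = y j k \<bullet> d - gj \<bullet> d" "(y j k - gj) \<bullet> (wt - xk) = y j k \<bullet> (wt - xk) - gj \<bullet> (wt - xk)"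
      by (simp_all add: inner_diff_left)
    then show ?thesis using opt S1 S2 nwt ywt yd by (simp add: algebra_simps)
  qed
  have h2: "G wt \<le> (1 - tt) * G xk + tt * G w"
    unfolding wt_eq using convex_onD[OF G_convex, of tt xk w] tt_pos tt_le1 xk w by simp
  have h3: "F xk + gF xk \<bullet> (w - xk) + mu / 2 * (norm (w - xk))\<^sup>2 \<le> F w" by (rule F_lower[OF xk w])
  have h4: "F (xhalf j k) \<le> F xk + alpha * (gF xk \<bullet> d) + L / 2 * alpha\<^sup>2 * (norm d)\<^sup>2"
    using F_upper[OF xk xhalf] alpha_pos unfolding xhalf_eq by (simp add: power_mult_distrib)
  have h5: "G (xhalf j k) \<le> (1 - alpha) * G xk + alpha * G xh"
    unfolding xhalf_eq2 using convex_onD[OF G_convex, of alpha xk xh] alpha_pos alpha_le1 xk xh by simp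
  have h6: "e \<bullet> (w - xk) \<le> mu / 4 * (norm (w - xk))\<^sup>2 + (norm e)\<^sup>2 / mu"
    by (rule inner_young[OF mu_pos])
  have h7: "- (e \<bullet> d) \<le> mut j / 4 * (norm d)\<^sup>2 + (norm e)\<^sup>2 / mut j"
    using inner_young[OF mut_pos[OF j], of "- e" d] by simp
  have "F (xhalf j k) + G (xhalf j k) \<le> (1 - alpha * tt) * (F xk + G xk) + alpha * tt * (F w + G w)
      - alpha * (mmin / 8) * (norm d)\<^sup>2 + alpha * (1 / mu + 1 / mmin) * (norm e)\<^sup>2"
    by (rule descent_core[OF h1 h2 h3 h4 h5 h6 h7 Lj_tt[OF j] tt_pos tt_le1 mmin_pos mmin_le[OF j] small alpha_pos])
       (use mu_pos in auto)
  then show ?thesis by (simp add: U_F xk_def d_def xh_def e_def)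
qed

end



context run begin

definition Ustar where "Ustar = Inf (U ` K)"
definition a where "a k = diam m (\<lambda>i. x i k)"
definition b where "b k = diam m (\<lambda>i. y i k)"
definition q where "q k = Max ((\<lambda>j. norm (xhat j k - x j k)) ` {..<m})"
definition V where "V k = (\<Sum>i<m. (phi i k / real m) * (U (x i k) - Ustar))"

lemma a_ge: "i < m \<Longrightarrow> j < m \<Longrightarrow> norm (x i k - x j k) \<le> a k"
  unfolding a_def using diam_ge[of i m j "\<lambda>i. x i k"] by simp
lemma b_ge: "i < m \<Longrightarrow> j < m \<Longrightarrow> norm (y i k - y j k) \<le> b k"
  unfolding b_def using diam_ge[of i m j "\<lambda>i. y i k"] by simp
lemma a_nonneg: "a k \<ge> 0" unfolding a_def by (rule diam_nonneg[OF m_pos])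
lemma b_nonneg: "b k \<ge> 0" unfolding b_def by (rule diam_nonneg[OF m_pos])
lemma q_ge: "j < m \<Longrightarrow> norm (xhat j k - x j k) \<le> q k" unfolding q_def by (rule Max_ge) auto
lemma q_in: "\<exists>j<m. q k = norm (xhat j k - x j k)"
proof -
  have "q k \<in> (\<lambda>j. norm (xhat j k - x j k)) ` {..<m}"
    unfolding q_def using m_pos by (intro Min_in Max_in) (auto simp: lessThan_empty_iff)
  then show ?thesis by auto
qed
lemma q_nonneg: "q k \<ge> 0" using q_ge[of 0 k] m_pos by (meson le_less_trans norm_ge_zero not_le zero_less_one order.trans less_le_trans) 

lemma e_bound: assumes j: "j < m" shows "norm (y j k - gF (x j k)) \<le> b k + Lf * a k"
proof -
  define ybar where "ybar = (1 / real m) *\<^sub>R (\<Sum>i<m. phi i k *\<^sub>R y i k)"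
  have m0: "real m > 0" using m_pos by simp
  have yb2: "ybar = (1 / real m) *\<^sub>R (\<Sum>i<m. gf i (x i k))" unfolding ybar_def track ..
  have "y j k - ybar = (1 / real m) *\<^sub>R (\<Sum>i<m. phi i k *\<^sub>R (y j k - y i k))"
  proof -
    have "(\<Sum>i<m. phi i k *\<^sub>R (y j k - y i k)) = (\<Sum>i<m. phi i k) *\<^sub>R y j k - (\<Sum>i<m. phi i k *\<^sub>R y i k)"
      by (simp add: scaleR_diff_right sum_subtractf scaleR_sum_left)
    then show ?thesis using m0 by (simp add: ybar_def phi_sum scaleR_diff_right)
  qed
  then have "norm (y j k - ybar) = (1 / real m) * norm (\<Sum>i<m. phi i k *\<^sub>R (y j k - y i k))"
    using m0 by simp
  also have "\<dots> \<le> (1 / real m) * (\<Sum>i<m. norm (phi i k *\<^sub>R (y j k - y i k)))"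
    by (intro mult_left_mono norm_sum) (use m0 in simp)
  also have "\<dots> \<le> (1 / real m) * (\<Sum>i<m. phi i k * b k)"
    using m0 phi_nonneg j by (intro mult_left_mono sum_mono) (auto intro!: mult_left_mono b_ge)
  also have "\<dots> = b k" using m0 by (simp add: sum_distrib_right[symmetric] phi_sum)
  finally have n1: "norm (y j k - ybar) \<le> b k" .
  have "ybar - gF (x j k) = (1 / real m) *\<^sub>R (\<Sum>i<m. gf i (x i k) - gf i (x j k))"
    by (simp add: yb2 gF_def sum_subtractf scaleR_diff_right)
  then have "norm (ybar - gF (x j k)) = (1 / real m) * norm (\<Sum>i<m. gf i (x i k) - gf i (x j k))"
    using m0 by simp
  also have "\<dots> \<le> (1 / real m) * (\<Sum>i<m. norm (gf i (x i k) - gf i (x j k)))"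
    by (intro mult_left_mono norm_sum) (use m0 in simp)
  also have "\<dots> \<le> (1 / real m) * (\<Sum>i<m. Lf * a k)"
  proof (intro mult_left_mono sum_mono)
    fix i assume i: "i \<in> {..<m}"
    have "norm (gf i (x i k) - gf i (x j k)) \<le> Lf * norm (x i k - x j k)"
      using gf_lipschitz i x_K j by auto
    also have "\<dots> \<le> Lf * a k" using Lf_pos i j by (intro mult_left_mono a_ge) auto
    finally show "norm (gf i (x i k) - gf i (x j k)) \<le> Lf * a k" .
  qed (use m0 in simp)
  also have "\<dots> = Lf * a k" using m0 by simp
  finally have n2: "norm (ybar - gF (x j k)) \<le> Lf * a k" .
  have "norm (y j k - gF (x j k)) \<le> norm (y j k - ybar) + norm (ybar - gF (x j k))"
    using norm_triangle_ineq[of "y j k - ybar" "ybar - gF (x j k)"] by simp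
  then show ?thesis using n1 n2 by simp
qed

end



context prob begin

definition k1 where "k1 = mmin / 8 * eta / real m"
definition k2 where "k2 = 2 * (1 / mu + 1 / mmin) * (1 + Lf\<^sup>2)"
definition Gam where "Gam = 2 * real T * Lf / eta"
definition rt where "rt = (1 - rho) / 2"
definition gg where "gg = sqrt (3 * k2 / (k1 * tt))"
definition P1 where "P1 = 4 * real T / rt"
definition P2 where "P2 = 2 * Gam / rt"
definition abar where "abar = min (min 1 (mmin / (4 * L))) (min (2 * (1 - rho) / (real T * tt)) (1 / (4 * gg\<^sup>2 * (P1 + P2)\<^sup>2 * (2 + P2)\<^sup>2)))"

lemma k1_pos: "k1 > 0" using mmin_pos eta_pos m_pos by (simp add: k1_def)
lemma k2_pos: "k2 > 0" using mmin_pos mu_pos by (simp add: k2_def add_pos_nonneg)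
lemma rt_pos: "rt > 0" using dlt_pos m_pos by (simp add: rt_def rho_def)
lemma Gam_pos: "Gam > 0" using T_pos Lf_pos eta_pos by (simp add: Gam_def)
lemma gg_pos: "gg > 0" using k1_pos k2_pos tt_pos by (simp add: gg_def)
lemma P1_pos: "P1 > 0" using T_pos rt_pos by (simp add: P1_def)
lemma P2_pos: "P2 > 0" using Gam_pos rt_pos by (simp add: P2_def)
lemma abar_pos: "abar > 0"
  using mmin_pos L_pos dlt_pos m_pos T_pos tt_pos gg_pos P1_pos P2_pos
  by (simp add: abar_def rho_def)
lemma abar_le1: "abar \<le> 1" by (simp add: abar_def)

end

locale run2 = run +
  assumes alpha_lt: "alpha < abar"
begin

lemma small: "alpha * L \<le> mmin / 4"
proof -
  have "alpha \<le> mmin / (4 * L)" using alpha_lt by (simp add: abar_def)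
  then show ?thesis using L_pos by (simp add: field_simps)
qed

lemma at_pos: "alpha * tt > 0" using alpha_pos tt_pos by simp
lemma at_le1: "alpha * tt \<le> 1" using alpha_pos alpha_le1 tt_pos tt_le1 by (simp add: mult_le_one)

abbreviation "dd j k \<equiv> xhat j k - x j k"
abbreviation "ee j k \<equiv> y j k - gF (x j k)"

lemma lower_aux: "j < m \<Longrightarrow> w \<in> K \<Longrightarrow>
   (U (xhalf j k) - (1 - alpha * tt) * U (x j k) + alpha * (mmin / 8) * (norm (dd j k))\<^sup>2
     - alpha * (1 / mu + 1 / mmin) * (norm (ee j k))\<^sup>2) / (alpha * tt) \<le> U w"
proof -
  assume j: "j < m" and w: "w \<in> K"
  have "U (xhalf j k) - (1 - alpha * tt) * U (x j k) + alpha * (mmin / 8) * (norm (dd j k))\<^sup>2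
     - alpha * (1 / mu + 1 / mmin) * (norm (ee j k))\<^sup>2 \<le> (alpha * tt) * U w"
    using node_descent[OF j w small, of k] by simp
  then show ?thesis using at_pos by (simp add: divide_le_eq mult.commute)
qed

lemma U_bdd: "bdd_below (U ` K)"
  using lower_aux[of 0 _ 0] m_pos by (auto intro!: bdd_belowI2)

lemma U_ge: "w \<in> K \<Longrightarrow> Ustar \<le> U w"
  unfolding Ustar_def by (rule cInf_lower) (use U_bdd in auto)

lemma inf_step: assumes j: "j < m"
  shows "U (xhalf j k) - Ustar \<le> (1 - alpha * tt) * (U (x j k) - Ustar) - alpha * (mmin / 8) * (norm (dd j k))\<^sup>2
          + alpha * (1 / mu + 1 / mmin) * (norm (ee j k))\<^sup>2"
proof -
  define Z where "Z = (U (xhalf j k) - (1 - alpha * tt) * U (x j k) + alpha * (mmin / 8) * (norm (dd j k))\<^sup>2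
     - alpha * (1 / mu + 1 / mmin) * (norm (ee j k))\<^sup>2)"
  have "Z / (alpha * tt) \<le> Ustar"
    unfolding Ustar_def by (rule cInf_greatest) (use K_ne lower_aux[OF j] in \<open>auto simp: Z_def\<close>)
  then have "Z \<le> alpha * tt * Ustar" using at_pos by (simp add: divide_le_eq mult.commute)
  then show ?thesis unfolding Z_def by (simp add: algebra_simps)
qed

lemma V_nonneg: "V k \<ge> 0"
  unfolding V_def using phi_nonneg U_ge x_K m_pos by (auto intro!: sum_nonneg mult_nonneg_nonneg)

end



context run2 begin

lemma conv_step: "i < m \<Longrightarrow> U (x i (Suc k)) \<le> (\<Sum>j<m. W k i j * U (xhalf j k))"
proof -
  assume i: "i < m"
  have "x i (Suc k) = (\<Sum>j<m. W k i j *\<^sub>R xhalf j k)" using x_upd_W[OF i] xhalf_def by simp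
  moreover have "U (\<Sum>j<m. W k i j *\<^sub>R xhalf j k) \<le> (\<Sum>j<m. W k i j * U (xhalf j k))"
    by (rule convex_on_sum[OF _ _ U_convex]) (use m_pos W_rows[OF i] W_nonneg i xhalf_K in \<open>auto simp: lessThan_empty_iff\<close>)
  ultimately show ?thesis by simp
qed

lemma V_mid: "V (Suc k) \<le> (\<Sum>j<m. (phi j k / real m) * (U (xhalf j k) - Ustar))"
proof -
  have m0: "real m > 0" using m_pos by simp
  have "V (Suc k) \<le> (\<Sum>i<m. (phi i (Suc k) / real m) * ((\<Sum>j<m. W k i j * U (xhalf j k)) - Ustar))"
    unfolding V_def
    by (intro sum_mono mult_left_mono diff_right_mono) (use conv_step phi_nonneg m0 in auto)
  also have "\<dots> = (\<Sum>i<m. \<Sum>j<m. (phi i (Suc k) / real m) * (W k i j * (U (xhalf j k) - Ustar)))"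
  proof (rule sum.cong)
    fix i assume i: "i \<in> {..<m}"
    have "(\<Sum>j<m. W k i j * U (xhalf j k)) - Ustar = (\<Sum>j<m. W k i j * (U (xhalf j k) - Ustar))"
      using W_rows[of i k] i by (simp add: right_diff_distrib sum_subtractf sum_distrib_right[symmetric])
    then show "(phi i (Suc k) / real m) * ((\<Sum>j<m. W k i j * U (xhalf j k)) - Ustar)
        = (\<Sum>j<m. (phi i (Suc k) / real m) * (W k i j * (U (xhalf j k) - Ustar)))"
      by (simp add: sum_distrib_left)
  qed simp
  also have "\<dots> = (\<Sum>i<m. \<Sum>j<m. (c k i j * phi j k / real m) * (U (xhalf j k) - Ustar))"
  proof (intro sum.cong refl)
    fix i j assume i: "i \<in> {..<m}" and j: "j \<in> {..<m}"
    have "phi i (Suc k) \<noteq> 0" using phi_pos[of i "Suc k"] i by simp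
    then show "(phi i (Suc k) / real m) * (W k i j * (U (xhalf j k) - Ustar))
        = (c k i j * phi j k / real m) * (U (xhalf j k) - Ustar)"
      by (simp add: W_def)
  qed
  also have "\<dots> = (\<Sum>j<m. \<Sum>i<m. (c k i j * phi j k / real m) * (U (xhalf j k) - Ustar))" by (rule sum.swap)
  also have "\<dots> = (\<Sum>j<m. (phi j k / real m) * (U (xhalf j k) - Ustar))"
  proof (rule sum.cong)
    fix j assume j: "j \<in> {..<m}"
    have "(\<Sum>i<m. (c k i j * phi j k / real m) * (U (xhalf j k) - Ustar))
        = (\<Sum>i<m. c k i j * ((phi j k / real m) * (U (xhalf j k) - Ustar)))"
      by (rule sum.cong) simp_all
    also have "\<dots> = (\<Sum>i<m. c k i j) * ((phi j k / real m) * (U (xhalf j k) - Ustar))"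
      by (rule sum_distrib_right[symmetric])
    finally have "(\<Sum>i<m. (c k i j * phi j k / real m) * (U (xhalf j k) - Ustar))
        = (\<Sum>i<m. c k i j) * ((phi j k / real m) * (U (xhalf j k) - Ustar))" .
    then show "(\<Sum>i<m. (c k i j * phi j k / real m) * (U (xhalf j k) - Ustar))
        = (phi j k / real m) * (U (xhalf j k) - Ustar)" using c_colstoch j by simp
  qed simp
  finally show ?thesis .
qed

lemma V_step: "V (Suc k) \<le> (1 - alpha * tt) * V k - alpha * k1 * (q k)\<^sup>2 + alpha * k2 * ((a k)\<^sup>2 + (b k)\<^sup>2)"
proof -
  have m0: "real m > 0" using m_pos by simp
  define p where "p j = phi j k / real m" for j
  have p0: "j < m \<Longrightarrow> p j \<ge> 0" for j using phi_nonneg m0 by (simp add: p_def)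
  have ps: "(\<Sum>j<m. p j) = 1" using m0 by (simp add: p_def sum_divide_distrib[symmetric] phi_sum)
  have "V (Suc k) \<le> (\<Sum>j<m. p j * (U (xhalf j k) - Ustar))" using V_mid by (simp add: p_def)
  also have "\<dots> \<le> (\<Sum>j<m. p j * ((1 - alpha * tt) * (U (x j k) - Ustar) - alpha * (mmin / 8) * (norm (dd j k))\<^sup>2
          + alpha * (1 / mu + 1 / mmin) * (norm (ee j k))\<^sup>2))"
    by (intro sum_mono mult_left_mono) (use inf_step p0 in auto)
  also have "\<dots> = (1 - alpha * tt) * V k - alpha * (mmin / 8) * (\<Sum>j<m. p j * (norm (dd j k))\<^sup>2)
          + alpha * (1 / mu + 1 / mmin) * (\<Sum>j<m. p j * (norm (ee j k))\<^sup>2)"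
  proof -
    have "\<And>j. p j * ((1 - alpha * tt) * (U (x j k) - Ustar) - alpha * (mmin / 8) * (norm (dd j k))\<^sup>2
          + alpha * (1 / mu + 1 / mmin) * (norm (ee j k))\<^sup>2)
        = (1 - alpha * tt) * (p j * (U (x j k) - Ustar)) - alpha * (mmin / 8) * (p j * (norm (dd j k))\<^sup>2)
          + alpha * (1 / mu + 1 / mmin) * (p j * (norm (ee j k))\<^sup>2)"
      by (simp add: algebra_simps)
    then have "(\<Sum>j<m. p j * ((1 - alpha * tt) * (U (x j k) - Ustar) - alpha * (mmin / 8) * (norm (dd j k))\<^sup>2
          + alpha * (1 / mu + 1 / mmin) * (norm (ee j k))\<^sup>2))
        = (\<Sum>j<m. (1 - alpha * tt) * (p j * (U (x j k) - Ustar)) - alpha * (mmin / 8) * (p j * (norm (dd j k))\<^sup>2)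
          + alpha * (1 / mu + 1 / mmin) * (p j * (norm (ee j k))\<^sup>2))" by simp
    also have "\<dots> = (1 - alpha * tt) * (\<Sum>j<m. p j * (U (x j k) - Ustar)) - alpha * (mmin / 8) * (\<Sum>j<m. p j * (norm (dd j k))\<^sup>2)
          + alpha * (1 / mu + 1 / mmin) * (\<Sum>j<m. p j * (norm (ee j k))\<^sup>2)"
      by (simp add: sum.distrib sum_subtractf sum_distrib_left)
    also have "(\<Sum>j<m. p j * (U (x j k) - Ustar)) = V k" by (simp add: V_def p_def)
    finally show ?thesis .
  qed
  also have "\<dots> \<le> (1 - alpha * tt) * V k - alpha * k1 * (q k)\<^sup>2 + alpha * k2 * ((a k)\<^sup>2 + (b k)\<^sup>2)"
  proof -
    obtain j0 where j0: "j0 < m" "q k = norm (dd j0 k)" using q_in by blast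
    have "eta / real m * (q k)\<^sup>2 \<le> p j0 * (norm (dd j0 k))\<^sup>2"
      using j0 phi_lb[OF j0(1), of k] m0 by (auto simp: p_def intro!: mult_right_mono divide_right_mono)
    also have "\<dots> \<le> (\<Sum>j<m. p j * (norm (dd j k))\<^sup>2)"
      by (rule member_le_sum[of j0 "{..<m}" "\<lambda>j. p j * (norm (dd j k))\<^sup>2"]) (use j0 p0 in auto)
    finally have D: "eta / real m * (q k)\<^sup>2 \<le> (\<Sum>j<m. p j * (norm (dd j k))\<^sup>2)" .
    have "(\<Sum>j<m. p j * (norm (ee j k))\<^sup>2) \<le> (\<Sum>j<m. p j * (b k + Lf * a k)\<^sup>2)"
      by (intro sum_mono mult_left_mono power_mono) (use e_bound p0 in auto)
    also have "\<dots> = (b k + Lf * a k)\<^sup>2" using ps by (simp add: sum_distrib_right[symmetric])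
    also have "\<dots> \<le> 2 * (1 + Lf\<^sup>2) * ((a k)\<^sup>2 + (b k)\<^sup>2)"
    proof -
      have "0 \<le> (b k - Lf * a k)\<^sup>2" by simp
      then have "(b k + Lf * a k)\<^sup>2 \<le> 2 * (b k)\<^sup>2 + 2 * (Lf * a k)\<^sup>2"
        by (simp add: power2_eq_square algebra_simps)
      also have "\<dots> \<le> 2 * (1 + Lf\<^sup>2) * ((a k)\<^sup>2 + (b k)\<^sup>2)"
        by (simp add: power_mult_distrib algebra_simps)
      finally show ?thesis .
    qed
    finally have E: "(\<Sum>j<m. p j * (norm (ee j k))\<^sup>2) \<le> 2 * (1 + Lf\<^sup>2) * ((a k)\<^sup>2 + (b k)\<^sup>2)" .
    have c1p: "alpha * (mmin / 8) \<ge> 0" using alpha_pos mmin_pos by simp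
    have c2p: "alpha * (1 / mu + 1 / mmin) \<ge> 0" using alpha_pos mmin_pos mu_pos by simp
    have "alpha * (mmin / 8) * (eta / real m * (q k)\<^sup>2) \<le> alpha * (mmin / 8) * (\<Sum>j<m. p j * (norm (dd j k))\<^sup>2)"
      using D c1p by (rule mult_left_mono)
    moreover have "alpha * (1 / mu + 1 / mmin) * (\<Sum>j<m. p j * (norm (ee j k))\<^sup>2)
        \<le> alpha * (1 / mu + 1 / mmin) * (2 * (1 + Lf\<^sup>2) * ((a k)\<^sup>2 + (b k)\<^sup>2))"
      using E c2p by (rule mult_left_mono)
    moreover have "alpha * (mmin / 8) * (eta / real m * (q k)\<^sup>2) = alpha * k1 * (q k)\<^sup>2"
      by (simp add: k1_def)
    moreover have "alpha * (1 / mu + 1 / mmin) * (2 * (1 + Lf\<^sup>2) * ((a k)\<^sup>2 + (b k)\<^sup>2)) = alpha * k2 * ((a k)\<^sup>2 + (b k)\<^sup>2)"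
      unfolding k2_def by (simp only: mult.assoc mult.commute mult.left_commute)
    ultimately show ?thesis by linarith
  qed
  finally show ?thesis .
qed

end



context run2 begin

lemma a_bound: assumes lb: "\<And>i j. i < m \<Longrightarrow> j < m \<Longrightarrow> Wp W m s n i j \<ge> \<delta>"
  shows "a (s + n) \<le> (1 - real m * \<delta>) * a s + 2 * (\<Sum>k<n. alpha * q (s + k))"
  unfolding a_def
proof (rule consensus_bound[OF m_pos W_nonneg W_rows x_upd_W _ lb])
  fix k j assume j: "j < m"
  show "norm (alpha *\<^sub>R (xhat j k - x j k)) \<le> alpha * q k"
    using q_ge[OF j, of k] alpha_pos by (simp add: mult_left_mono)
qed

lemma a_gen: "a (s + n) \<le> a s + 2 * (\<Sum>k<n. alpha * q (s + k))"
  using a_bound[where s=s and n=n and \<delta>=0] Wp_nonneg[of m W, OF W_nonneg] by simp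

lemma a_T: "a (s + T) \<le> rho * a s + 2 * (\<Sum>k<T. alpha * q (s + k))"
  using a_bound[where s=s and n=T and \<delta>=dlt] W_prod_lb by (simp add: rho_def)

lemma x_move: assumes j: "j < m" shows "norm (x j (Suc k) - x j k) \<le> a k + alpha * q k"
proof -
  have "x j (Suc k) - x j k = (\<Sum>l<m. W k j l *\<^sub>R ((x l k - x j k) + alpha *\<^sub>R (xhat l k - x l k)))"
  proof -
    have "(\<Sum>l<m. W k j l *\<^sub>R ((x l k - x j k) + alpha *\<^sub>R (xhat l k - x l k)))
        = (\<Sum>l<m. W k j l *\<^sub>R (x l k + alpha *\<^sub>R (xhat l k - x l k))) - (\<Sum>l<m. W k j l) *\<^sub>R x j k"
    proof -
      have "(\<Sum>l<m. W k j l *\<^sub>R ((x l k - x j k) + alpha *\<^sub>R (xhat l k - x l k)))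
          = (\<Sum>l<m. W k j l *\<^sub>R (x l k + alpha *\<^sub>R (xhat l k - x l k)) - W k j l *\<^sub>R x j k)"
        by (rule sum.cong) (simp_all add: scaleR_diff_right scaleR_add_right)
      also have "\<dots> = (\<Sum>l<m. W k j l *\<^sub>R (x l k + alpha *\<^sub>R (xhat l k - x l k))) - (\<Sum>l<m. W k j l *\<^sub>R x j k)"
        by (rule sum_subtractf)
      also have "(\<Sum>l<m. W k j l *\<^sub>R x j k) = (\<Sum>l<m. W k j l) *\<^sub>R x j k" by (rule scaleR_sum_left[symmetric])
      finally show ?thesis .
    qed
    then show ?thesis using x_upd_W[OF j, of k] W_rows[OF j, of k] by simp
  qed
  then have "norm (x j (Suc k) - x j k) \<le> (\<Sum>l<m. norm (W k j l *\<^sub>R ((x l k - x j k) + alpha *\<^sub>R (xhat l k - x l k))))"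
    using norm_sum[of "\<lambda>l. W k j l *\<^sub>R ((x l k - x j k) + alpha *\<^sub>R (xhat l k - x l k))" "{..<m}"] by (simp only:)
  also have "\<dots> \<le> (\<Sum>l<m. W k j l * (a k + alpha * q k))"
  proof (intro sum_mono)
    fix l assume l: "l \<in> {..<m}"
    have "norm ((x l k - x j k) + alpha *\<^sub>R (xhat l k - x l k)) \<le> norm (x l k - x j k) + norm (alpha *\<^sub>R (xhat l k - x l k))"
      by (rule norm_triangle_ineq)
    also have "\<dots> \<le> a k + alpha * q k"
      using a_ge[of l j k] q_ge[of l k] l j alpha_pos by (auto intro!: add_mono mult_left_mono)
    finally show "norm (W k j l *\<^sub>R ((x l k - x j k) + alpha *\<^sub>R (xhat l k - x l k))) \<le> W k j l * (a k + alpha * q k)"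
      using W_nonneg[OF j, of l k] l by (simp add: mult_left_mono)
  qed
  also have "\<dots> = a k + alpha * q k" using W_rows[OF j, of k] by (simp add: sum_distrib_right[symmetric])
  finally show ?thesis .
qed

definition pb where "pb k = Lf / eta * (a k + alpha * q k)"

lemma b_bound: assumes lb: "\<And>i j. i < m \<Longrightarrow> j < m \<Longrightarrow> Wp W m s n i j \<ge> \<delta>"
  shows "b (s + n) \<le> (1 - real m * \<delta>) * b s + 2 * (\<Sum>k<n. pb (s + k))"
  unfolding b_def
proof (rule consensus_bound[OF m_pos W_nonneg W_rows y_upd_W _ lb])
  fix k j assume j: "j < m"
  have "norm ((1 / phi j k) *\<^sub>R (gf j (x j (Suc k)) - gf j (x j k))) = (1 / phi j k) * norm (gf j (x j (Suc k)) - gf j (x j k))"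
    using phi_pos[OF j, of k] by simp
  also have "\<dots> \<le> (1 / eta) * (Lf * norm (x j (Suc k) - x j k))"
  proof (rule mult_mono)
    show "1 / phi j k \<le> 1 / eta" using phi_lb[OF j] eta_pos by (simp add: frac_le)
    show "norm (gf j (x j (Suc k)) - gf j (x j k)) \<le> Lf * norm (x j (Suc k) - x j k)"
      using gf_lipschitz[OF j x_K[OF j] x_K[OF j]] .
  qed (use eta_pos in auto)
  also have "\<dots> \<le> (1 / eta) * (Lf * (a k + alpha * q k))"
    using x_move[OF j, of k] Lf_pos eta_pos by (intro mult_left_mono) auto
  also have "\<dots> = pb k" by (simp add: pb_def)
  finally show "norm ((1 / phi j k) *\<^sub>R (gf j (x j (Suc k)) - gf j (x j k))) \<le> pb k" .
qed

lemma b_gen: "b (s + n) \<le> b s + 2 * (\<Sum>k<n. pb (s + k))"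
  using b_bound[where s=s and n=n and \<delta>=0] Wp_nonneg[of m W, OF W_nonneg] by simp

lemma b_T: "b (s + T) \<le> rho * b s + 2 * (\<Sum>k<T. pb (s + k))"
  using b_bound[where s=s and n=T and \<delta>=dlt] W_prod_lb by (simp add: rho_def)

end



lemma lin_aux1: fixes X r :: real shows "X \<le> 2 * (1 - r) \<Longrightarrow> (1 + r) / 2 \<le> 1 - X / 4" by (simp add: field_simps)

context run2 begin

definition rr where "rr = 1 - alpha * tt / 4"

lemma rr_pos: "rr > 0" using at_le1 by (simp add: rr_def)
lemma rr_lt1: "rr < 1" using at_pos by (simp add: rr_def)
lemma rr_le1: "rr \<le> 1" using rr_lt1 by simp
lemma rr_sq: "1 - alpha * tt / 2 \<le> rr\<^sup>2"
proof -
  have "rr\<^sup>2 = 1 - alpha * tt / 2 + (alpha * tt)\<^sup>2 / 16" by (simp add: rr_def power2_eq_square algebra_simps)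
  then show ?thesis by simp
qed
lemma rt_le: "rt \<le> 1 / 2" using rho_nonneg by (simp add: rt_def)
lemma rr_T: "(1 + rho) / 2 \<le> rr ^ T"
proof -
  have "alpha \<le> 2 * (1 - rho) / (real T * tt)" using alpha_lt by (simp add: abar_def)
  then have "alpha * (real T * tt) \<le> 2 * (1 - rho)" using T_pos tt_pos by (simp add: le_divide_eq)
  then have h: "(1 + rho) / 2 \<le> 1 - alpha * (real T * tt) / 4"
    using lin_aux1[of "alpha * (real T * tt)" rho] by blast
  have "1 + real T * (- (alpha * tt / 4)) = 1 - alpha * (real T * tt) / 4" by (simp add: algebra_simps)
  with h have "(1 + rho) / 2 \<le> 1 + real T * (- (alpha * tt / 4))" by simp
  also have "\<dots> \<le> (1 + (- (alpha * tt / 4))) ^ T"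
    by (rule Bernoulli_inequality) (use at_le1 in simp)
  finally show ?thesis by (simp add: rr_def)
qed
lemma rr_T_half: "1 / 2 \<le> rr ^ T" using rr_T rho_nonneg by simp
lemma rr_pow_le: "rr ^ (s + k) \<le> rr ^ s"
  using rr_pos rr_le1 by (simp add: power_add mult_left_le power_le_one)

lemma eps_bound: "sqrt alpha * gg * ((P1 + P2) * (2 + P2)) \<le> 1 / 2"
proof -
  define Q where "Q = gg * ((P1 + P2) * (2 + P2))"
  have Q0: "Q > 0" using gg_pos P1_pos P2_pos by (simp add: Q_def)
  have "alpha \<le> 1 / (4 * gg\<^sup>2 * (P1 + P2)\<^sup>2 * (2 + P2)\<^sup>2)" using alpha_lt by (simp add: abar_def)
  also have "\<dots> = (1 / (2 * Q))\<^sup>2" by (simp add: Q_def power2_eq_square)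
  finally have "sqrt alpha \<le> sqrt ((1 / (2 * Q))\<^sup>2)" by (rule real_sqrt_le_mono)
  also have "\<dots> = 1 / (2 * Q)" using Q0 by simp
  finally have "sqrt alpha * Q \<le> 1 / (2 * Q) * Q" using Q0 by (intro mult_right_mono) auto
  also have "\<dots> = 1 / 2" using Q0 by simp
  finally show ?thesis by (simp add: Q_def mult.assoc)
qed

lemma sum_le_card: "(\<And>k. k < n \<Longrightarrow> g0 k \<le> (C::real)) \<Longrightarrow> (\<Sum>k<n. g0 k) \<le> real n * C"
  using sum_bounded_above[of "{..<n}" g0 C] by simp

end



lemma lin_l3: fixes a b c d :: real assumes "a \<le> b" "c = d + b" shows "d + a \<le> c"
  using assms by simp

lemma lin_l1: fixes Z r k :: real assumes "4 * Z \<le> (1 - r) / 2 * k" "Z \<ge> 0"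
  shows "r * k + 2 * Z \<le> k * ((1 + r) / 2)"
  using assms by (simp add: algebra_simps)
lemma lin_l2: fixes Z r k :: real assumes "2 * Z \<le> (1 - r) / 2 * k" "Z \<ge> 0"
  shows "r * k + Z \<le> k * ((1 + r) / 2)"
  using assms by (simp add: algebra_simps)

context run2 begin

lemma gain: "\<exists>C. \<forall>\<nu>. V \<nu> \<le> C * (rr ^ \<nu>)\<^sup>2"
proof -
  define V0 where "V0 = V 0"
  define a0 where "a0 = a 0"
  define b0 where "b0 = b 0"
  have V0: "V0 \<ge> 0" using V_nonneg by (simp add: V0_def)
  have a0: "a0 \<ge> 0" using a_nonneg by (simp add: a0_def)
  have b0: "b0 \<ge> 0" using b_nonneg by (simp add: b0_def)
  define w0 where "w0 = sqrt (alpha * V0 / k1)"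
  define eps where "eps = sqrt alpha * gg"
  define R where "R = 2 * a0 + P1 * w0 + 2 * b0 + P2 * w0"
  define ka where "ka = 2 * R"
  define kb where "kb = (1 + P2) * ka"
  define Kv where "Kv = V0 + 2 * k2 / tt * (ka\<^sup>2 + kb\<^sup>2)"
  define kq where "kq = sqrt (V0 / (alpha * k1)) + sqrt (3 * k2 / (k1 * tt * alpha)) * (ka + kb)"
  have w0: "w0 \<ge> 0" using V0 k1_pos alpha_pos by (simp add: w0_def)
  have R0: "R \<ge> 0" using a0 b0 w0 P1_pos P2_pos by (simp add: R_def)
  have ka0: "ka \<ge> 0" using R0 by (simp add: ka_def)
  have kb0: "kb \<ge> 0" using ka0 P2_pos by (simp add: kb_def)
  have kq0: "kq \<ge> 0" using ka0 kb0 V0 alpha_pos k1_pos k2_pos tt_pos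
    unfolding kq_def by (intro add_nonneg_nonneg mult_nonneg_nonneg real_sqrt_ge_zero) auto
  have eps0: "eps \<ge> 0" using gg_pos alpha_pos by (simp add: eps_def)
  have akq: "alpha * kq = w0 + eps * (ka + kb)"
  proof -
    have "alpha * sqrt (V0 / (alpha * k1)) = sqrt (alpha\<^sup>2 * (V0 / (alpha * k1)))"
      using alpha_pos by (simp only: real_sqrt_mult real_sqrt_abs, (simp)?)
    also have "alpha\<^sup>2 * (V0 / (alpha * k1)) = alpha * V0 / k1" using alpha_pos by (simp add: power2_eq_square)
    finally have 1: "alpha * sqrt (V0 / (alpha * k1)) = w0" by (simp add: w0_def)
    have "alpha * sqrt (3 * k2 / (k1 * tt * alpha)) = sqrt (alpha\<^sup>2 * (3 * k2 / (k1 * tt * alpha)))"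
      using alpha_pos by (simp only: real_sqrt_mult real_sqrt_abs, (simp)?)
    also have "alpha\<^sup>2 * (3 * k2 / (k1 * tt * alpha)) = alpha * (3 * k2 / (k1 * tt))"
      using alpha_pos by (simp add: power2_eq_square)
    also have "sqrt (alpha * (3 * k2 / (k1 * tt))) = eps" unfolding eps_def gg_def by (rule real_sqrt_mult)
    finally have 2: "alpha * sqrt (3 * k2 / (k1 * tt * alpha)) = eps" .
    show ?thesis unfolding kq_def using 1 2 by (simp add: distrib_left mult.assoc[symmetric])
  qed
  have epsb: "eps * ((P1 + P2) * (2 + P2)) \<le> 1 / 2" using eps_bound by (simp add: eps_def)
  have kab: "ka + kb = (2 + P2) * ka" by (simp add: kb_def algebra_simps)
  have C1: "2 * a0 + P1 * (alpha * kq) \<le> ka"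
  proof -
    have "P1 * (eps * (ka + kb)) = (P1 * (eps * (2 + P2))) * ka" unfolding kab by (simp add: algebra_simps)
    also have "\<dots> \<le> (1 / 2) * ka"
    proof (rule mult_right_mono[OF _ ka0])
      have "P1 * (eps * (2 + P2)) \<le> (P1 + P2) * (eps * (2 + P2))"
        using P2_pos eps0 by (intro mult_right_mono) auto
      also have "\<dots> = eps * ((P1 + P2) * (2 + P2))" by (simp add: algebra_simps)
      finally show "P1 * (eps * (2 + P2)) \<le> 1 / 2" using epsb by simp
    qed
    finally have "P1 * (eps * (ka + kb)) \<le> ka / 2" by simp
    moreover have "2 * a0 + P1 * w0 \<le> R" using b0 w0 P2_pos by (simp add: R_def)
    ultimately show ?thesis unfolding akq ka_def by (simp add: distrib_left)
  qed
  have C2: "2 * b0 + P2 * ka + P2 * (alpha * kq) \<le> kb"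
  proof -
    have "P2 * (eps * (ka + kb)) = (P2 * (eps * (2 + P2))) * ka" unfolding kab by (simp add: algebra_simps)
    also have "\<dots> \<le> (1 / 2) * ka"
    proof (rule mult_right_mono[OF _ ka0])
      have "P2 * (eps * (2 + P2)) \<le> (P1 + P2) * (eps * (2 + P2))"
        using P1_pos P2_pos eps0 by (intro mult_right_mono) auto
      also have "\<dots> = eps * ((P1 + P2) * (2 + P2))" by (simp add: algebra_simps)
      finally show "P2 * (eps * (2 + P2)) \<le> 1 / 2" using epsb by simp
    qed
    finally have "P2 * (eps * (ka + kb)) \<le> ka / 2" by simp
    moreover have "2 * b0 + P2 * w0 \<le> R" using a0 w0 P1_pos by (simp add: R_def)
    ultimately show ?thesis unfolding akq kb_def ka_def by (simp add: algebra_simps)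
  qed
  have CQ: "Kv / (alpha * k1) + k2 / k1 * (ka\<^sup>2 + kb\<^sup>2) \<le> kq\<^sup>2"
  proof -
    define A where "A = V0 / (alpha * k1)"
    define Bc where "Bc = 3 * k2 / (k1 * tt * alpha)"
    have A0: "A \<ge> 0" using V0 alpha_pos k1_pos by (simp add: A_def)
    have B0: "Bc \<ge> 0" using k2_pos k1_pos tt_pos alpha_pos by (simp add: Bc_def)
    have "Kv / (alpha * k1) + k2 / k1 * (ka\<^sup>2 + kb\<^sup>2) = A + (2 * k2 / (tt * alpha * k1) + k2 / k1) * (ka\<^sup>2 + kb\<^sup>2)"
      using alpha_pos k1_pos tt_pos by (simp add: Kv_def A_def add_divide_distrib algebra_simps)
    also have "(2 * k2 / (tt * alpha * k1) + k2 / k1) \<le> Bc"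
    proof -
      have "k2 / k1 \<le> k2 / (k1 * (tt * alpha))"
        using k1_pos k2_pos tt_pos alpha_pos at_le1 by (intro divide_left_mono) (auto simp: mult.commute mult_le_cancel_left1)
      note h = this
      have eq1: "tt * alpha * k1 = k1 * tt * alpha" by (simp add: mult_ac)
      have eq2: "k1 * (tt * alpha) = k1 * tt * alpha" by (simp add: mult_ac)
      have eq3: "3 * k2 / (k1 * tt * alpha) = 2 * k2 / (k1 * tt * alpha) + k2 / (k1 * tt * alpha)"
        by (simp only: add_divide_distrib[symmetric]) simp
      show ?thesis unfolding Bc_def eq1 by (rule lin_l3[OF h[unfolded eq2] eq3])
    qed
    then have "A + (2 * k2 / (tt * alpha * k1) + k2 / k1) * (ka\<^sup>2 + kb\<^sup>2) \<le> A + Bc * (ka\<^sup>2 + kb\<^sup>2)"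
      by (intro add_left_mono mult_right_mono) auto
    also have "\<dots> \<le> A + Bc * (ka + kb)\<^sup>2"
      using ka0 kb0 B0 by (intro add_left_mono mult_left_mono) (auto simp: power2_eq_square algebra_simps)
    also have "\<dots> \<le> (sqrt A + sqrt Bc * (ka + kb))\<^sup>2"
    proof -
      have "(sqrt A + sqrt Bc * (ka + kb))\<^sup>2 = A + Bc * (ka + kb)\<^sup>2 + 2 * sqrt A * sqrt Bc * (ka + kb)"
        using A0 B0 by (simp add: power2_eq_square algebra_simps)
      moreover have "2 * sqrt A * sqrt Bc * (ka + kb) \<ge> 0" using A0 B0 ka0 kb0 by simp
      ultimately show ?thesis by simp
    qed
    finally show ?thesis by (simp add: kq_def A_def Bc_def)
  qed
  have P1e: "P1 * rt = 4 * real T" using rt_pos by (simp add: P1_def)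
  have P2e: "P2 * rt = 2 * Gam" using rt_pos by (simp add: P2_def)
  have akq0: "alpha * kq \<ge> 0" using alpha_pos kq0 by simp
  have hP1: "4 * real T * (alpha * kq) \<le> rt * ka"
  proof -
    have "P1 * (alpha * kq) \<le> ka" using C1 a0 by linarith
    then have "rt * (P1 * (alpha * kq)) \<le> rt * ka" using rt_pos by (intro mult_left_mono) auto
    then show ?thesis using P1e by (simp add: algebra_simps)
  qed
  have hP2: "2 * Gam * (ka + alpha * kq) \<le> rt * kb"
  proof -
    have "P2 * (ka + alpha * kq) \<le> kb" using C2 b0 by (simp add: algebra_simps)
    then have "rt * (P2 * (ka + alpha * kq)) \<le> rt * kb" using rt_pos by (intro mult_left_mono) auto
    then show ?thesis using P2e by (simp add: algebra_simps)
  qed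
  have hA0: "a0 + 2 * real T * (alpha * kq) \<le> ka / 2"
  proof -
    have "4 * real T * (alpha * kq) \<le> P1 * (alpha * kq)"
    proof (rule mult_right_mono[OF _ akq0])
      have "4 * real T * rt \<le> 4 * real T * 1" using rt_le by (intro mult_left_mono) auto
      then show "4 * real T \<le> P1" using P1e rt_pos by (simp add: P1_def divide_simps)
    qed
    then show ?thesis using C1 by linarith
  qed
  have hB0: "b0 + Gam * (ka + alpha * kq) \<le> kb / 2"
  proof -
    have "2 * Gam * (ka + alpha * kq) \<le> P2 * (ka + alpha * kq)"
    proof (rule mult_right_mono)
      have "2 * Gam * rt \<le> 2 * Gam * 1" using rt_le Gam_pos by (intro mult_left_mono) auto
      then show "2 * Gam \<le> P2" using P2e rt_pos by (simp add: P2_def divide_simps)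
    qed (use ka0 akq0 in simp)
    then show ?thesis using C2 by (simp add: algebra_simps)
  qed
  have rrT: "(1 + rho) / 2 \<le> rr ^ T" by (rule rr_T)
  have rr0: "0 < rr" "rr \<le> 1" using rr_pos rr_le1 by auto
  have inv: "a \<nu> \<le> ka * rr ^ \<nu> \<and> b \<nu> \<le> kb * rr ^ \<nu> \<and> V \<nu> \<le> Kv * (rr ^ \<nu>)\<^sup>2 \<and> q \<nu> \<le> kq * rr ^ \<nu>" for \<nu>
  proof (induction \<nu> rule: less_induct)
    case (less \<nu>)
    have IHa: "a k \<le> ka * rr ^ k" if "k < \<nu>" for k using less that by blast
    have IHb: "b k \<le> kb * rr ^ k" if "k < \<nu>" for k using less that by blast
    have IHV: "V k \<le> Kv * (rr ^ k)\<^sup>2" if "k < \<nu>" for k using less that by blast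
    have IHq: "q k \<le> kq * rr ^ k" if "k < \<nu>" for k using less that by blast
    have qs: "alpha * q (s + k) \<le> alpha * kq * rr ^ s" if "s + k < \<nu>" for s k
    proof -
      have "q (s + k) \<le> kq * rr ^ (s + k)" using IHq that by blast
      also have "\<dots> \<le> kq * rr ^ s" using rr_pow_le kq0 by (intro mult_left_mono) auto
      finally show ?thesis using alpha_pos by (simp add: mult_left_mono mult.assoc)
    qed
    have pbs: "pb (s + k) \<le> Lf / eta * (ka + alpha * kq) * rr ^ s" if "s + k < \<nu>" for s k
    proof -
      have "a (s + k) \<le> ka * rr ^ s" using IHa[OF that] rr_pow_le[of s k] ka0 by (meson mult_left_mono order_trans)
      moreover have "alpha * q (s + k) \<le> alpha * kq * rr ^ s" using qs that by blast
      ultimately have "a (s + k) + alpha * q (s + k) \<le> (ka + alpha * kq) * rr ^ s" by (simp add: algebra_simps)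
      then have "Lf / eta * (a (s + k) + alpha * q (s + k)) \<le> Lf / eta * ((ka + alpha * kq) * rr ^ s)"
        using Lf_pos eta_pos by (intro mult_left_mono) auto
      then show ?thesis unfolding pb_def by (simp only: mult.assoc)
    qed
    have A: "a \<nu> \<le> ka * rr ^ \<nu>"
    proof (cases "\<nu> < T")
      case True
      have "a \<nu> \<le> a0 + 2 * (\<Sum>k<\<nu>. alpha * q (0 + k))" using a_gen[of 0 \<nu>] by (simp add: a0_def)
      also have "(\<Sum>k<\<nu>. alpha * q (0 + k)) \<le> real \<nu> * (alpha * kq * rr ^ 0)"
        by (rule sum_le_card) (use qs[of 0] in simp)
      also have "real \<nu> * (alpha * kq * rr ^ 0) \<le> real T * (alpha * kq)"
        using True akq0 by (simp add: mult_right_mono)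
      finally have "a \<nu> \<le> ka / 2" using hA0 by linarith
      also have "ka / 2 \<le> ka * rr ^ \<nu>"
      proof -
        have "1 / 2 \<le> rr ^ T" by (rule rr_T_half)
        also have "rr ^ T \<le> rr ^ \<nu>" using True rr0 by (intro power_decreasing) auto
        finally show ?thesis using ka0 by (simp add: mult_left_mono[of "1/2" _ ka, simplified])
      qed
      finally show ?thesis .
    next
      case False
      then obtain s where s: "\<nu> = s + T" by (metis add.commute le_add_diff_inverse not_less)
      have sl: "s < \<nu>" using s T_pos by simp
      have "a \<nu> \<le> rho * a s + 2 * (\<Sum>k<T. alpha * q (s + k))" using a_T[of s] s by simp
      also have "\<dots> \<le> rho * (ka * rr ^ s) + 2 * (real T * (alpha * kq * rr ^ s))"
      proof (intro add_mono mult_left_mono)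
        show "a s \<le> ka * rr ^ s" by (rule IHa[OF sl])
        show "(\<Sum>k<T. alpha * q (s + k)) \<le> real T * (alpha * kq * rr ^ s)"
          by (rule sum_le_card) (use qs s in simp)
      qed (use rho_nonneg in auto)
      also have "\<dots> = (rho * ka + 2 * real T * (alpha * kq)) * rr ^ s" by (simp add: algebra_simps)
      also have "\<dots> \<le> (ka * ((1 + rho) / 2)) * rr ^ s"
      proof (rule mult_right_mono)
        have Z0: "real T * (alpha * kq) \<ge> 0" using akq0 by simp
        have "4 * (real T * (alpha * kq)) \<le> (1 - rho) / 2 * ka" using hP1 by (simp add: rt_def mult.assoc)
        then have "rho * ka + 2 * (real T * (alpha * kq)) \<le> ka * ((1 + rho) / 2)" using Z0 by (rule lin_l1)
        then show "rho * ka + 2 * real T * (alpha * kq) \<le> ka * ((1 + rho) / 2)" by (simp add: mult.assoc)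
      qed (use rr0 in simp)
      also have "\<dots> \<le> (ka * rr ^ T) * rr ^ s" using rrT ka0 rr0 by (intro mult_right_mono mult_left_mono) auto
      also have "\<dots> = ka * rr ^ \<nu>" by (simp add: s power_add)
      finally show ?thesis .
    qed
    have Bb: "b \<nu> \<le> kb * rr ^ \<nu>"
    proof (cases "\<nu> < T")
      case True
      have "b \<nu> \<le> b0 + 2 * (\<Sum>k<\<nu>. pb (0 + k))" using b_gen[of 0 \<nu>] by (simp add: b0_def)
      also have "(\<Sum>k<\<nu>. pb (0 + k)) \<le> real \<nu> * (Lf / eta * (ka + alpha * kq) * rr ^ 0)"
        by (rule sum_le_card) (use pbs[of 0] in simp)
      also have "real \<nu> * (Lf / eta * (ka + alpha * kq) * rr ^ 0) \<le> real T * (Lf / eta * (ka + alpha * kq))"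
      proof -
        have "0 \<le> Lf / eta * (ka + alpha * kq)" using Lf_pos eta_pos ka0 akq0 by simp
        moreover have "real \<nu> \<le> real T" using True by simp
        ultimately have "real \<nu> * (Lf / eta * (ka + alpha * kq)) \<le> real T * (Lf / eta * (ka + alpha * kq))"
          by (rule mult_right_mono[rotated])
        then show ?thesis by simp
      qed
      finally have "b \<nu> \<le> b0 + Gam * (ka + alpha * kq)" by (simp add: Gam_def algebra_simps)
      also have "\<dots> \<le> kb / 2" by (rule hB0)
      also have "kb / 2 \<le> kb * rr ^ \<nu>"
      proof -
        have "1 / 2 \<le> rr ^ T" by (rule rr_T_half)
        also have "rr ^ T \<le> rr ^ \<nu>" using True rr0 by (intro power_decreasing) auto
        finally show ?thesis using kb0 by (simp add: mult_left_mono[of "1/2" _ kb, simplified])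
      qed
      finally show ?thesis .
    next
      case False
      then obtain s where s: "\<nu> = s + T" by (metis add.commute le_add_diff_inverse not_less)
      have sl: "s < \<nu>" using s T_pos by simp
      have "b \<nu> \<le> rho * b s + 2 * (\<Sum>k<T. pb (s + k))" using b_T[of s] s by simp
      also have "\<dots> \<le> rho * (kb * rr ^ s) + 2 * (real T * (Lf / eta * (ka + alpha * kq) * rr ^ s))"
      proof (intro add_mono mult_left_mono)
        show "b s \<le> kb * rr ^ s" by (rule IHb[OF sl])
        show "(\<Sum>k<T. pb (s + k)) \<le> real T * (Lf / eta * (ka + alpha * kq) * rr ^ s)"
          by (rule sum_le_card) (use pbs s in simp)
      qed (use rho_nonneg in auto)
      also have "\<dots> = (rho * kb + Gam * (ka + alpha * kq)) * rr ^ s" by (simp add: Gam_def algebra_simps)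
      also have "\<dots> \<le> (kb * ((1 + rho) / 2)) * rr ^ s"
      proof (rule mult_right_mono)
        have Z0: "Gam * (ka + alpha * kq) \<ge> 0" using akq0 ka0 Gam_pos by simp
        have "2 * (Gam * (ka + alpha * kq)) \<le> (1 - rho) / 2 * kb" using hP2 by (simp add: rt_def mult.assoc)
        then show "rho * kb + Gam * (ka + alpha * kq) \<le> kb * ((1 + rho) / 2)" using Z0 by (rule lin_l2)
      qed (use rr0 in simp)
      also have "\<dots> \<le> (kb * rr ^ T) * rr ^ s" using rrT kb0 rr0 by (intro mult_right_mono mult_left_mono) auto
      also have "\<dots> = kb * rr ^ \<nu>" by (simp add: s power_add)
      finally show ?thesis .
    qed
    have Vb: "V \<nu> \<le> Kv * (rr ^ \<nu>)\<^sup>2"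
    proof (cases \<nu>)
      case 0
      have "V0 \<le> Kv" using k2_pos tt_pos by (simp add: Kv_def)
      then show ?thesis using 0 by (simp add: V0_def)
    next
      case (Suc k)
      have kl: "k < \<nu>" using Suc by simp
      have a2: "(a k)\<^sup>2 \<le> ka\<^sup>2 * (rr ^ k)\<^sup>2"
        using IHa[OF kl] a_nonneg by (metis power_mono power_mult_distrib)
      have b2: "(b k)\<^sup>2 \<le> kb\<^sup>2 * (rr ^ k)\<^sup>2"
        using IHb[OF kl] b_nonneg by (metis power_mono power_mult_distrib)
      have "V \<nu> \<le> (1 - alpha * tt) * V k - alpha * k1 * (q k)\<^sup>2 + alpha * k2 * ((a k)\<^sup>2 + (b k)\<^sup>2)"
        using V_step[of k] Suc by simp
      also have "\<dots> \<le> (1 - alpha * tt) * (Kv * (rr ^ k)\<^sup>2) + alpha * k2 * ((ka\<^sup>2 + kb\<^sup>2) * (rr ^ k)\<^sup>2)"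
      proof -
        have "(1 - alpha * tt) * V k \<le> (1 - alpha * tt) * (Kv * (rr ^ k)\<^sup>2)"
          using IHV[OF kl] at_le1 by (intro mult_left_mono) auto
        moreover have "alpha * k2 * ((a k)\<^sup>2 + (b k)\<^sup>2) \<le> alpha * k2 * ((ka\<^sup>2 + kb\<^sup>2) * (rr ^ k)\<^sup>2)"
          using a2 b2 alpha_pos k2_pos by (intro mult_left_mono) (auto simp: algebra_simps)
        moreover have "alpha * k1 * (q k)\<^sup>2 \<ge> 0" using alpha_pos k1_pos by simp
        ultimately show ?thesis by linarith
      qed
      also have "\<dots> = ((1 - alpha * tt) * Kv + alpha * k2 * (ka\<^sup>2 + kb\<^sup>2)) * (rr ^ k)\<^sup>2"
        by (simp add: algebra_simps)
      also have "\<dots> \<le> (rr\<^sup>2 * Kv) * (rr ^ k)\<^sup>2"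
      proof (rule mult_right_mono)
        have "alpha * k2 * (ka\<^sup>2 + kb\<^sup>2) = alpha * tt / 2 * (2 * k2 / tt * (ka\<^sup>2 + kb\<^sup>2))"
          using tt_pos by (simp add: field_simps)
        also have "\<dots> \<le> alpha * tt / 2 * Kv" using at_pos V0 by (intro mult_left_mono) (auto simp: Kv_def)
        finally have "(1 - alpha * tt) * Kv + alpha * k2 * (ka\<^sup>2 + kb\<^sup>2) \<le> (1 - alpha * tt / 2) * Kv"
          by (simp add: algebra_simps)
        also have "\<dots> \<le> rr\<^sup>2 * Kv"
          using rr_sq V0 k2_pos tt_pos by (intro mult_right_mono) (auto simp: Kv_def)
        finally show "(1 - alpha * tt) * Kv + alpha * k2 * (ka\<^sup>2 + kb\<^sup>2) \<le> rr\<^sup>2 * Kv" .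
      qed simp
      also have "\<dots> = Kv * (rr ^ \<nu>)\<^sup>2" by (simp add: Suc power_mult_distrib algebra_simps)
      finally show ?thesis .
    qed
    have Qb: "q \<nu> \<le> kq * rr ^ \<nu>"
    proof -
      have "0 \<le> V (Suc \<nu>)" by (rule V_nonneg)
      also have "\<dots> \<le> (1 - alpha * tt) * V \<nu> - alpha * k1 * (q \<nu>)\<^sup>2 + alpha * k2 * ((a \<nu>)\<^sup>2 + (b \<nu>)\<^sup>2)"
        by (rule V_step)
      finally have "alpha * k1 * (q \<nu>)\<^sup>2 \<le> (1 - alpha * tt) * V \<nu> + alpha * k2 * ((a \<nu>)\<^sup>2 + (b \<nu>)\<^sup>2)" by simp
      also have "(1 - alpha * tt) * V \<nu> \<le> V \<nu>" 
      proof -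
        have "0 \<le> (alpha * tt) * V \<nu>" using V_nonneg[of \<nu>] at_pos by simp
        then show ?thesis by (simp add: algebra_simps)
      qed
      finally have qq: "alpha * k1 * (q \<nu>)\<^sup>2 \<le> V \<nu> + alpha * k2 * ((a \<nu>)\<^sup>2 + (b \<nu>)\<^sup>2)" by simp
      have a2: "(a \<nu>)\<^sup>2 \<le> ka\<^sup>2 * (rr ^ \<nu>)\<^sup>2"
        using A a_nonneg by (metis power_mono power_mult_distrib)
      have b2: "(b \<nu>)\<^sup>2 \<le> kb\<^sup>2 * (rr ^ \<nu>)\<^sup>2"
        using Bb b_nonneg by (metis power_mono power_mult_distrib)
      have "alpha * k1 * (q \<nu>)\<^sup>2 \<le> Kv * (rr ^ \<nu>)\<^sup>2 + alpha * k2 * ((ka\<^sup>2 + kb\<^sup>2) * (rr ^ \<nu>)\<^sup>2)"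
      proof -
        have "alpha * k2 * ((a \<nu>)\<^sup>2 + (b \<nu>)\<^sup>2) \<le> alpha * k2 * ((ka\<^sup>2 + kb\<^sup>2) * (rr ^ \<nu>)\<^sup>2)"
          using a2 b2 alpha_pos k2_pos by (intro mult_left_mono) (auto simp: algebra_simps)
        then show ?thesis using qq Vb by linarith
      qed
      then have "(q \<nu>)\<^sup>2 \<le> (Kv / (alpha * k1) + k2 / k1 * (ka\<^sup>2 + kb\<^sup>2)) * (rr ^ \<nu>)\<^sup>2"
        using alpha_pos k1_pos by (simp add: field_simps)
      also have "\<dots> \<le> kq\<^sup>2 * (rr ^ \<nu>)\<^sup>2" using CQ by (intro mult_right_mono) auto
      also have "\<dots> = (kq * rr ^ \<nu>)\<^sup>2" by (simp add: power_mult_distrib)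
      finally have "(q \<nu>)\<^sup>2 \<le> (kq * rr ^ \<nu>)\<^sup>2" .
      moreover have "0 \<le> kq * rr ^ \<nu>" using kq0 rr0 by simp
      ultimately show ?thesis by (rule power2_le_imp_le)
    qed
    show ?case using A Bb Vb Qb by blast
  qed
  show ?thesis using inv by blast
qed

end



context run2 begin

lemma conv: assumes i: "i < m" shows "R_linear_conv (\<lambda>\<nu>. U (x i \<nu>)) Ustar"
proof -
  obtain C where C: "\<And>\<nu>. V \<nu> \<le> C * (rr ^ \<nu>)\<^sup>2" using gain by blast
  have m0: "real m > 0" using m_pos by simp
  have bnd: "\<bar>U (x i \<nu>) - Ustar\<bar> \<le> (real m / eta * C) * (rr\<^sup>2) ^ \<nu>" for \<nu>
  proof -
    have nn: "U (x i \<nu>) - Ustar \<ge> 0" using U_ge[OF x_K[OF i]] by simp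
    have "(phi i \<nu> / real m) * (U (x i \<nu>) - Ustar) \<le> V \<nu>"
      unfolding V_def
      by (rule member_le_sum[of i "{..<m}" "\<lambda>i. (phi i \<nu> / real m) * (U (x i \<nu>) - Ustar)"])
         (use i phi_nonneg U_ge x_K m0 in \<open>auto intro!: mult_nonneg_nonneg\<close>)
    moreover have "(eta / real m) * (U (x i \<nu>) - Ustar) \<le> (phi i \<nu> / real m) * (U (x i \<nu>) - Ustar)"
      using phi_lb[OF i] nn m0 by (intro mult_right_mono divide_right_mono) auto
    ultimately have "(eta / real m) * (U (x i \<nu>) - Ustar) \<le> C * (rr ^ \<nu>)\<^sup>2" using C[of \<nu>] by linarith
    then have "U (x i \<nu>) - Ustar \<le> (real m / eta) * (C * (rr ^ \<nu>)\<^sup>2)"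
      using eta_pos m0 by (simp add: field_simps)
    then show ?thesis using nn by (simp add: power_mult_distrib power_mult[symmetric] mult.commute mult.left_commute)
  qed
  have z: "0 < rr\<^sup>2" "rr\<^sup>2 < 1" using rr_pos rr_lt1 by (auto simp: power_less_one_iff)
  show ?thesis unfolding R_linear_conv_def using z bnd by blast
qed

end




theorem theorem4p5:
  fixes m :: nat
    and K Oset :: "'a::euclidean_space set"
    and f :: "nat \<Rightarrow> 'a \<Rightarrow> real"
    and gf :: "nat \<Rightarrow> 'a \<Rightarrow> 'a"
    and Hf :: "nat \<Rightarrow> 'a \<Rightarrow> 'a \<Rightarrow> 'a"
    and G :: "'a \<Rightarrow> real"
    and mu L :: real
    and E :: "nat \<Rightarrow> (nat \<times> nat) set"
    and B :: nat
    and c :: "nat \<Rightarrow> nat \<Rightarrow> nat \<Rightarrow> real"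
    and c_l :: real
    and ft :: "nat \<Rightarrow> 'a \<Rightarrow> 'a \<Rightarrow> real"
    and gft :: "nat \<Rightarrow> 'a \<Rightarrow> 'a \<Rightarrow> 'a"
    and Hft :: "nat \<Rightarrow> 'a \<Rightarrow> 'a \<Rightarrow> 'a \<Rightarrow> 'a"
    and Lt mut Dl Du :: "nat \<Rightarrow> real"
  defines "HF \<equiv> (\<lambda>x h. (1 / real m) *\<^sub>R (\<Sum>i<m. Hf i x h))"
    and "U \<equiv> (\<lambda>x. (1 / real m) * (\<Sum>i<m. f i x) + G x)"
    and "Ustar \<equiv> Inf ((\<lambda>x. (1 / real m) * (\<Sum>i<m. f i x) + G x) ` K)"
  assumes m_pos: "m \<ge> 1"
    \<comment> \<open>Assumption (A)\<close>
    and K_ne: "K \<noteq> {}" and K_closed: "closed K" and K_convex: "convex K"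
    and O_open: "open Oset" and K_sub_O: "K \<subseteq> Oset"
    and f_grad: "\<And>i x. i < m \<Longrightarrow> x \<in> Oset \<Longrightarrow> (f i has_derivative (\<lambda>h. gf i x \<bullet> h)) (at x)"
    and f_hess: "\<And>i x. i < m \<Longrightarrow> x \<in> Oset \<Longrightarrow> (gf i has_derivative Hf i x) (at x)"
    and f_convex: "\<And>i. i < m \<Longrightarrow> convex_on Oset (f i)"
    and mu_pos: "mu > 0"
    and F_hess_bounds: "\<And>x h. x \<in> K \<Longrightarrow>
        mu * (norm h)\<^sup>2 \<le> HF x h \<bullet> h \<and> HF x h \<bullet> h \<le> L * (norm h)\<^sup>2"
    and G_convex: "convex_on K G"
    \<comment> \<open>Assumption (B')\<close>
    and E_vertices: "\<And>\<nu>. E \<nu> \<subseteq> {..<m} \<times> {..<m}"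
    and B_pos: "B > 0"
    and B_conn: "\<And>k. strongly_connected_digraph {..<m} (\<Union>t\<in>{k * B..<(k + 1) * B}. E t)"
    \<comment> \<open>Assumption (E)\<close>
    and c_l_pos: "c_l > 0"
    and c_diag: "\<And>\<nu> i. i < m \<Longrightarrow> c \<nu> i i \<ge> c_l"
    and c_edge: "\<And>\<nu> i j. i < m \<Longrightarrow> j < m \<Longrightarrow> j \<noteq> i \<Longrightarrow> (j, i) \<in> E \<nu> \<Longrightarrow> c \<nu> i j \<ge> c_l"
    and c_zero: "\<And>\<nu> i j. i < m \<Longrightarrow> j < m \<Longrightarrow> j \<noteq> i \<Longrightarrow> (j, i) \<notin> E \<nu> \<Longrightarrow> c \<nu> i j = 0"
    and c_colstoch: "\<And>\<nu> j. j < m \<Longrightarrow> (\<Sum>i<m. c \<nu> i j) = 1"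
    \<comment> \<open>Assumption (C)\<close>
    and ft_C2: "\<And>i. i < m \<Longrightarrow> C2_on (Oset \<times> Oset) (\<lambda>p. ft i (fst p) (snd p))"
    and ft_grad: "\<And>i x y. i < m \<Longrightarrow> x \<in> Oset \<Longrightarrow> y \<in> Oset \<Longrightarrow>
        ((\<lambda>u. ft i u y) has_derivative (\<lambda>h. gft i x y \<bullet> h)) (at x)"
    and ft_hess: "\<And>i x y. i < m \<Longrightarrow> x \<in> Oset \<Longrightarrow> y \<in> Oset \<Longrightarrow>
        ((\<lambda>u. gft i u y) has_derivative Hft i x y) (at x)"
    and ft_grad_consistent: "\<And>i x. i < m \<Longrightarrow> x \<in> Oset \<Longrightarrow> gft i x x = gf i x"
    and ft_lipschitz: "\<And>i x. i < m \<Longrightarrow> x \<in> K \<Longrightarrow> lipschitz_on (Lt i) K (\<lambda>u. gft i u x)"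
    and mut_pos: "\<And>i. i < m \<Longrightarrow> mut i > 0"
    and ft_strongly_convex: "\<And>i x. i < m \<Longrightarrow> x \<in> K \<Longrightarrow> strongly_convex_on (mut i) K (\<lambda>u. ft i u x)"
    and D_le: "\<And>i. i < m \<Longrightarrow> Dl i \<le> Du i"
    and D_bounds: "\<And>i x y h. i < m \<Longrightarrow> x \<in> K \<Longrightarrow> y \<in> K \<Longrightarrow>
        Dl i * (norm h)\<^sup>2 \<le> (Hft i x y h - HF x h) \<bullet> h \<and> (Hft i x y h - HF x h) \<bullet> h \<le> Du i * (norm h)\<^sup>2"
    \<comment> \<open>the theorem's extra hypothesis\<close>
    and mu_D: "Min (mut ` {..<m}) \<ge> Min (Dl ` {..<m})"
  shows "\<exists>abar. 0 < abar \<and> abar \<le> 1 \<and>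
    (\<forall>alpha x xhalf xhat y phi.
       0 < alpha \<and> alpha < abar \<and>
       \<comment> \<open>initialization\<close>
       (\<forall>i<m. x i 0 \<in> K \<and> y i 0 = gf i (x i 0) \<and> phi i 0 = 1) \<and>
       \<comment> \<open>local optimization step\<close>
       (\<forall>i<m. \<forall>\<nu>. xhat i \<nu> \<in> K \<and>
          (\<forall>z\<in>K. ft i (xhat i \<nu>) (x i \<nu>) + (y i \<nu> - gf i (x i \<nu>)) \<bullet> (xhat i \<nu> - x i \<nu>) + G (xhat i \<nu>)
                 \<le> ft i z (x i \<nu>) + (y i \<nu> - gf i (x i \<nu>)) \<bullet> (z - x i \<nu>) + G z)) \<and>
       (\<forall>i<m. \<forall>\<nu>. xhalf i \<nu> = x i \<nu> + alpha *\<^sub>R (xhat i \<nu> - x i \<nu>)) \<and>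
       \<comment> \<open>consensus and tracking steps\<close>
       (\<forall>i<m. \<forall>\<nu>. phi i (Suc \<nu>) = (\<Sum>j<m. c \<nu> i j * phi j \<nu>)) \<and>
       (\<forall>i<m. \<forall>\<nu>. x i (Suc \<nu>) = (1 / phi i (Suc \<nu>)) *\<^sub>R (\<Sum>j<m. (c \<nu> i j * phi j \<nu>) *\<^sub>R xhalf j \<nu>)) \<and>
       (\<forall>i<m. \<forall>\<nu>. y i (Suc \<nu>) = (1 / phi i (Suc \<nu>)) *\<^sub>R
          (\<Sum>j<m. c \<nu> i j *\<^sub>R (phi j \<nu> *\<^sub>R y j \<nu> + gf j (x j (Suc \<nu>)) - gf j (x j \<nu>))))
       \<longrightarrow> (\<forall>i<m. R_linear_conv (\<lambda>\<nu>. U (x i \<nu>)) Ustar))"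
proof -
  have Fh: "\<And>x h. x \<in> K \<Longrightarrow>
        mu * (norm h)\<^sup>2 \<le> ((1 / real m) *\<^sub>R (\<Sum>i<m. Hf i x h)) \<bullet> h \<and> ((1 / real m) *\<^sub>R (\<Sum>i<m. Hf i x h)) \<bullet> h \<le> L * (norm h)\<^sup>2"
    using F_hess_bounds unfolding HF_def .
  have Du': "\<And>i x y h. i < m \<Longrightarrow> x \<in> K \<Longrightarrow> y \<in> K \<Longrightarrow>
        (Hft i x y h - (1 / real m) *\<^sub>R (\<Sum>i<m. Hf i x h)) \<bullet> h \<le> Du i * (norm h)\<^sup>2"
    using D_bounds unfolding HF_def by blast
  interpret P: prob m K Oset f gf Hf G mu L E B c c_l ft gft Hft mut Du
    by unfold_locales (fact m_pos K_ne K_convex O_open K_sub_O f_grad f_hess f_convex mu_pos Fh G_convex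
        B_pos B_conn c_l_pos c_diag c_edge c_zero c_colstoch ft_grad ft_hess ft_grad_consistent mut_pos
        ft_strongly_convex Du')+
  show ?thesis
  proof (rule exI[of _ P.abar], intro conjI allI impI)
    show "0 < P.abar" by (rule P.abar_pos)
    show "P.abar \<le> 1" by (rule P.abar_le1)
    fix alpha x xhalf xhat y phi i
    assume H: "0 < alpha \<and> alpha < P.abar \<and>
       (\<forall>i<m. x i 0 \<in> K \<and> y i 0 = gf i (x i 0) \<and> phi i 0 = 1) \<and>
       (\<forall>i<m. \<forall>\<nu>. xhat i \<nu> \<in> K \<and>
          (\<forall>z\<in>K. ft i (xhat i \<nu>) (x i \<nu>) + (y i \<nu> - gf i (x i \<nu>)) \<bullet> (xhat i \<nu> - x i \<nu>) + G (xhat i \<nu>)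
                 \<le> ft i z (x i \<nu>) + (y i \<nu> - gf i (x i \<nu>)) \<bullet> (z - x i \<nu>) + G z)) \<and>
       (\<forall>i<m. \<forall>\<nu>. xhalf i \<nu> = x i \<nu> + alpha *\<^sub>R (xhat i \<nu> - x i \<nu>)) \<and>
       (\<forall>i<m. \<forall>\<nu>. phi i (Suc \<nu>) = (\<Sum>j<m. c \<nu> i j * phi j \<nu>)) \<and>
       (\<forall>i<m. \<forall>\<nu>. x i (Suc \<nu>) = (1 / phi i (Suc \<nu>)) *\<^sub>R (\<Sum>j<m. (c \<nu> i j * phi j \<nu>) *\<^sub>R xhalf j \<nu>)) \<and>
       (\<forall>i<m. \<forall>\<nu>. y i (Suc \<nu>) = (1 / phi i (Suc \<nu>)) *\<^sub>R
          (\<Sum>j<m. c \<nu> i j *\<^sub>R (phi j \<nu> *\<^sub>R y j \<nu> + gf j (x j (Suc \<nu>)) - gf j (x j \<nu>))))"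
    assume i: "i < m"
    have a1: "alpha \<le> 1" using H P.abar_le1 by linarith
    interpret R: run2 m K Oset f gf Hf G mu L E B c c_l ft gft Hft mut Du alpha x xhalf xhat y phi
    proof unfold_locales
      show "0 < alpha" using H by blast
      show "alpha \<le> 1" by (rule a1)
      show "alpha < P.abar" using H by blast
    qed (use H in blast)+
    have "R_linear_conv (\<lambda>\<nu>. P.U (x i \<nu>)) R.Ustar" by (rule R.conv[OF i])
    then show "R_linear_conv (\<lambda>\<nu>. U (x i \<nu>)) Ustar"
      unfolding U_def Ustar_def R.Ustar_def P.U_def[abs_def] .
  qed
qed


end
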